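(* For every $c>0$ and every local function $\phi$, $$\limsup_{k\to\infty}\ \limsup_{N\to\infty}\ \sup_{f_N:\,D_N(f_N)\le c/N}\ \sum_{\eta\in\Omega}\Big|\frac1{2k+1}\sum_{|z|\le k}\tau_z\phi(\eta)-\tilde\phi\Big(\frac1{2k+1}\sum_{|z|\le k}\eta^z_1,\ \frac1{2k+1}\sum_{|z|\le k}\eta^z_2\Big)\Big|\,f_N(\eta)\,3^{-N}=0,$$ the supremum being over probability densities $f_N$ with respect to $\nu^{1/3}_N$.
   Context: $\mathbb{T}_N=\mathbb{Z}/N\mathbb{Z}$. Configurations $\eta=(\eta^x_\alpha)_{\alpha\in\{0,1,2\},x\in\mathbb{T}_N}$, $\eta^x_\alpha\in\{0,1\}$, $\sum_\alpha\eta^x_\alpha=1$; $\Omega$ the set of configurations ($|\Omega|=3^N$). $\eta^{x,x+1}_{\alpha,\beta}$ = configuration with contents of $x,x+1$ exchanged when $\eta^x_\alpha\eta^{x+1}_\beta=1$ (else $\eta$). $\nu^{1/3}_N$ is the uniform measure on $\Omega$; a probability density is $f_N:\Omega\to[0,\infty)$ with $\sum_\eta f_N(\eta)3^{-N}=1$. Dirichlet form: $D_N(f)=\frac12\sum_{\eta\in\Omega}3^{-N}\sum_{x\in\mathbb{T}_N}\sum_{\alpha,\beta=0}^2\eta^x_\alpha\eta^{x+1}_\beta\big(\sqrt{f(\eta^{x,x+1}_{\alpha,\beta})}-\sqrt{f(\eta)}\big)^2$. A local function $\phi$ depends on finitely many sites, fixed independently of $N$; $\tau_z\phi(\eta)=\phi(\tau_z\eta)$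 with $(\tau_z\eta)^x=\eta^{x+z}$. $\tilde\phi(p_1,p_2)=\mathbb{E}_{\nu^p}[\phi]$ where $\nu^p$ is the product measure with $\nu^p(\eta^x_1=1)=p_1$, $\nu^p(\eta^x_2=1)=p_2$, $\nu^p(\eta^x_0=1)=1-p_1-p_2$. *)

theory Defs
  imports "HOL-Analysis.Analysis" "HOL-Library.Extended_Real"
begin

text \<open>Configurations on the torus Z/NZ: functions int => nat, where the value
  at site x in {0..<N} is the species alpha in {0,1,2} occupying x (i.e. eta^x_alpha = 1),
  and the value is 0 outside {0..<N} (canonical representative).\<close>

definition Omega :: "nat \<Rightarrow> (int \<Rightarrow> nat) set" where
  "Omega N = {\<eta>. \<forall>x. (0 \<le> x \<and> x < int N \<longrightarrow> \<eta> x < 3) \<and>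
                     (\<not> (0 \<le> x \<and> x < int N) \<longrightarrow> \<eta> x = 0)}"

definition swap_sites :: "nat \<Rightarrow> int \<Rightarrow> (int \<Rightarrow> nat) \<Rightarrow> (int \<Rightarrow> nat)" where
  "swap_sites N x \<eta> = \<eta>(x := \<eta> ((x + 1) mod int N), (x + 1) mod int N := \<eta> x)"

definition exch :: "nat \<Rightarrow> int \<Rightarrow> nat \<Rightarrow> nat \<Rightarrow> (int \<Rightarrow> nat) \<Rightarrow> (int \<Rightarrow> nat)" where
  "exch N x \<alpha> \<beta> \<eta> =
     (if \<eta> x = \<alpha> \<and> \<eta> ((x + 1) mod int N) = \<beta> then swap_sites N x \<eta> else \<eta>)"

definition Dirichlet :: "nat \<Rightarrow> ((int \<Rightarrow> nat) \<Rightarrow> real) \<Rightarrow> real" where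
  "Dirichlet N f = (1/2) * (\<Sum>\<eta>\<in>Omega N. (1/3)^N *
      (\<Sum>x\<in>{0..<int N}. \<Sum>\<alpha><3. \<Sum>\<beta><3.
         (if \<eta> x = \<alpha> \<and> \<eta> ((x + 1) mod int N) = \<beta> then 1 else 0) *
         (sqrt (f (exch N x \<alpha> \<beta> \<eta>)) - sqrt (f \<eta>))\<^sup>2))"

definition is_density :: "nat \<Rightarrow> ((int \<Rightarrow> nat) \<Rightarrow> real) \<Rightarrow> bool" where
  "is_density N f \<longleftrightarrow> (\<forall>\<eta>\<in>Omega N. 0 \<le> f \<eta>) \<and> (\<Sum>\<eta>\<in>Omega N. f \<eta> * (1/3)^N) = 1"

definition local_fun :: "int set \<Rightarrow> ((int \<Rightarrow> nat) \<Rightarrow> real) \<Rightarrow> bool" where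
  "local_fun S \<phi> \<longleftrightarrow> finite S \<and> (\<forall>\<eta> \<eta>'. (\<forall>x\<in>S. \<eta> x = \<eta>' x) \<longrightarrow> \<phi> \<eta> = \<phi> \<eta>')"

definition per :: "nat \<Rightarrow> (int \<Rightarrow> nat) \<Rightarrow> (int \<Rightarrow> nat)" where
  "per N \<eta> = (\<lambda>x. \<eta> (x mod int N))"

definition shift :: "int \<Rightarrow> (int \<Rightarrow> nat) \<Rightarrow> (int \<Rightarrow> nat)" where
  "shift z \<eta> = (\<lambda>x. \<eta> (x + z))"

definition site_weight :: "nat \<Rightarrow> real \<Rightarrow> real \<Rightarrow> real" where
  "site_weight a p1 p2 = (if a = 1 then p1 else if a = 2 then p2 else 1 - p1 - p2)"

text \<open>tilde phi (p1,p2) = E_{nu^p}[phi], computed over the (finite) support S of phi.\<close>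
definition phi_tilde :: "int set \<Rightarrow> ((int \<Rightarrow> nat) \<Rightarrow> real) \<Rightarrow> real \<Rightarrow> real \<Rightarrow> real" where
  "phi_tilde S \<phi> p1 p2 =
     (\<Sum>\<sigma>\<in>(S \<rightarrow>\<^sub>E {0,1,2::nat}). \<phi> \<sigma> * (\<Prod>x\<in>S. site_weight (\<sigma> x) p1 p2))"

definition box_avg :: "nat \<Rightarrow> nat \<Rightarrow> ((int \<Rightarrow> nat) \<Rightarrow> real) \<Rightarrow> (int \<Rightarrow> nat) \<Rightarrow> real" where
  "box_avg N k \<phi> \<eta> = (1 / (2 * real k + 1)) *
     (\<Sum>z\<in>{-int k..int k}. \<phi> (shift z (per N \<eta>)))"

definition box_density :: "nat \<Rightarrow> nat \<Rightarrow> nat \<Rightarrow> (int \<Rightarrow> nat) \<Rightarrow> real" where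
  "box_density N k a \<eta> = (1 / (2 * real k + 1)) *
     (\<Sum>z\<in>{-int k..int k}. if per N \<eta> z = a then 1 else 0)"

end

theory Submission
  imports Defs
begin

lemma finite_Omega: "finite (Omega N)"
proof -
  have "Omega N = {\<eta>. \<forall>x. (x \<in> {0..<int N} \<longrightarrow> \<eta> x \<in> {..<3}) \<and> (x \<notin> {0..<int N} \<longrightarrow> \<eta> x = 0)}"
    unfolding Omega_def by auto
  then show ?thesis using finite_set_of_finite_funs[of "{0..<int N}" "{..<3::nat}" 0] by simp
qed

lemma Omega_comp:
  assumes "\<rho> permutes {0..<int N}" "\<eta> \<in> Omega N"
  shows "\<eta> \<circ> \<rho> \<in> Omega N"
  using assms unfolding Omega_def
  by (auto simp: permutes_not_in) (metis atLeastLessThan_iff permutes_in_image)+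

lemma perm_bij:
  assumes "\<rho> permutes {0..<int N}"
  shows "bij_betw (\<lambda>\<eta>. \<eta> \<circ> \<rho>) (Omega N) (Omega N)"
proof (rule bij_betwI[where g="\<lambda>\<eta>. \<eta> \<circ> inv \<rho>"])
  have i: "inv \<rho> permutes {0..<int N}" using assms by (rule permutes_inv)
  show "(\<lambda>\<eta>. \<eta> \<circ> \<rho>) \<in> Omega N \<rightarrow> Omega N" using Omega_comp[OF assms] by auto
  show "(\<lambda>\<eta>. \<eta> \<circ> inv \<rho>) \<in> Omega N \<rightarrow> Omega N" using Omega_comp[OF i] by auto
  show "\<eta> \<circ> \<rho> \<circ> inv \<rho> = \<eta>" for \<eta>
    using permutes_inverses(1)[OF assms] by (simp add: comp_assoc fun_eq_iff)
  show "\<eta> \<circ> inv \<rho> \<circ> \<rho> = \<eta>" for \<eta>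
    using permutes_inverses(2)[OF assms] by (simp add: comp_assoc fun_eq_iff)
qed

lemma sum_perm:
  assumes "\<rho> permutes {0..<int N}"
  shows "(\<Sum>\<eta>\<in>Omega N. g (\<eta> \<circ> \<rho>)) = (\<Sum>\<eta>\<in>Omega N. g \<eta>)"
  using sum.reindex_bij_betw[OF perm_bij[OF assms], of g] by simp

definition dlt :: "nat \<Rightarrow> ((int\<Rightarrow>nat)\<Rightarrow>real) \<Rightarrow> (int\<Rightarrow>int) \<Rightarrow> real" where
  "dlt N f \<rho> = (\<Sum>\<eta>\<in>Omega N. \<bar>f (\<eta> \<circ> \<rho>) - f \<eta>\<bar> * (1/3)^N)"

lemma dlt_nonneg: "dlt N f \<rho> \<ge> 0"
  unfolding dlt_def by (intro sum_nonneg) auto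

lemma dlt_id: "dlt N f id = 0"
  unfolding dlt_def by simp

lemma dlt_comp:
  assumes "\<rho>1 permutes {0..<int N}" "\<rho>2 permutes {0..<int N}"
  shows "dlt N f (\<rho>1 \<circ> \<rho>2) \<le> dlt N f \<rho>1 + dlt N f \<rho>2"
proof -
  have "dlt N f (\<rho>1 \<circ> \<rho>2) \<le> (\<Sum>\<eta>\<in>Omega N. (\<bar>f ((\<eta> \<circ> \<rho>1) \<circ> \<rho>2) - f (\<eta> \<circ> \<rho>1)\<bar> + \<bar>f (\<eta> \<circ> \<rho>1) - f \<eta>\<bar>) * (1/3)^N)"
    unfolding dlt_def by (intro sum_mono mult_right_mono) (auto simp: comp_assoc)
  also have "\<dots> = (\<Sum>\<eta>\<in>Omega N. \<bar>f ((\<eta> \<circ> \<rho>1) \<circ> \<rho>2) - f (\<eta> \<circ> \<rho>1)\<bar> * (1/3)^N) + dlt N f \<rho>1"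
    unfolding dlt_def by (simp add: algebra_simps sum.distrib)
  also have "(\<Sum>\<eta>\<in>Omega N. \<bar>f ((\<eta> \<circ> \<rho>1) \<circ> \<rho>2) - f (\<eta> \<circ> \<rho>1)\<bar> * (1/3)^N) = dlt N f \<rho>2"
    unfolding dlt_def using sum_perm[OF assms(1), of "\<lambda>\<eta>. \<bar>f (\<eta> \<circ> \<rho>2) - f \<eta>\<bar> * (1/3)^N"] by simp
  finally show ?thesis by (simp add: o_def)
qed

lemma sum2_delta:
  fixes c :: real and n a b :: nat
  assumes "a < n" "b < n"
  shows "(\<Sum>\<alpha><n. \<Sum>\<beta><n. if \<alpha> = a \<and> \<beta> = b then c else 0) = c"
proof -
  have "(\<Sum>\<beta><n. if \<alpha> = a \<and> \<beta> = b then c else 0) = (if \<alpha> = a then c else 0)" for \<alpha>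
    using assms(2) by (cases "\<alpha> = a") (simp_all add: sum.delta[of "{..<n}" b "\<lambda>_. c", simplified])
  then show ?thesis using assms(1) by (simp add: sum.delta)
qed

lemma swap_sites_eq:
  "swap_sites N x \<eta> = \<eta> \<circ> Transposition.transpose x ((x + 1) mod int N)"
  unfolding swap_sites_def by (auto simp: fun_eq_iff Transposition.transpose_def)

lemma Dirichlet_single:
  assumes "is_density N f" "x \<in> {0..<int N}"
  shows "(\<Sum>\<eta>\<in>Omega N. (1/3)^N * (sqrt (f (\<eta> \<circ> Transposition.transpose x ((x + 1) mod int N))) - sqrt (f \<eta>))\<^sup>2)
         \<le> 2 * Dirichlet N f"
proof -
  have inner: "(\<Sum>\<alpha><3. \<Sum>\<beta><3. (if \<eta> y = \<alpha> \<and> \<eta> ((y + 1) mod int N) = \<beta> then 1 else 0) *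
         (sqrt (f (exch N y \<alpha> \<beta> \<eta>)) - sqrt (f \<eta>))\<^sup>2) = (sqrt (f (\<eta> \<circ> Transposition.transpose y ((y + 1) mod int N))) - sqrt (f \<eta>))\<^sup>2"
    if "\<eta> \<in> Omega N" "y \<in> {0..<int N}" for \<eta> y
  proof -
    have Np: "int N > 0" using that(2) by auto
    have a: "\<eta> y < 3" using that unfolding Omega_def by auto
    have b: "\<eta> ((y + 1) mod int N) < 3" using that Np unfolding Omega_def by auto
    have "(\<Sum>\<alpha><3. \<Sum>\<beta><3. (if \<eta> y = \<alpha> \<and> \<eta> ((y + 1) mod int N) = \<beta> then 1 else 0) *
         (sqrt (f (exch N y \<alpha> \<beta> \<eta>)) - sqrt (f \<eta>))\<^sup>2)
       = (\<Sum>\<alpha><3. \<Sum>\<beta><3. (if \<alpha> = \<eta> y \<and> \<beta> = \<eta> ((y + 1) mod int N) then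
         (sqrt (f (swap_sites N y \<eta>)) - sqrt (f \<eta>))\<^sup>2 else 0))"
      by (intro sum.cong refl) (auto simp: exch_def)
    also have "\<dots> = (sqrt (f (swap_sites N y \<eta>)) - sqrt (f \<eta>))\<^sup>2"
      using a b by (rule sum2_delta)
    finally show ?thesis by (simp add: swap_sites_eq)
  qed
  have D: "Dirichlet N f = 1/2 * (\<Sum>\<eta>\<in>Omega N. (1/3)^N *
      (\<Sum>y\<in>{0..<int N}. (sqrt (f (\<eta> \<circ> Transposition.transpose y ((y + 1) mod int N))) - sqrt (f \<eta>))\<^sup>2))"
    unfolding Dirichlet_def by (intro arg_cong[where f="\<lambda>t. 1/2 * t"] sum.cong refl arg_cong[where f="\<lambda>t. (1/3)^N * t"]) (simp add: inner)
  have "(\<Sum>\<eta>\<in>Omega N. (1/3)^N * (sqrt (f (\<eta> \<circ> Transposition.transpose x ((x + 1) mod int N))) - sqrt (f \<eta>))\<^sup>2)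
      \<le> (\<Sum>\<eta>\<in>Omega N. (1/3)^N * (\<Sum>y\<in>{0..<int N}. (sqrt (f (\<eta> \<circ> Transposition.transpose y ((y + 1) mod int N))) - sqrt (f \<eta>))\<^sup>2))"
    using assms(2) by (intro sum_mono mult_left_mono member_le_sum[where f="\<lambda>y. (sqrt (f (_ \<circ> Transposition.transpose y ((y + 1) mod int N))) - sqrt (f _))\<^sup>2"]) auto
  also have "\<dots> = 2 * Dirichlet N f" using D by simp
  finally show ?thesis .
qed

lemma sq_sum_le:
  fixes a b :: real assumes "a \<ge> 0" "b \<ge> 0"
  shows "(sqrt a + sqrt b)\<^sup>2 \<le> 2 * a + 2 * b"
proof -
  have "(sqrt a + sqrt b)\<^sup>2 + (sqrt a - sqrt b)\<^sup>2 = 2 * a + 2 * b"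
    using assms by (simp add: power2_sum power2_diff)
  moreover have "(sqrt a - sqrt b)\<^sup>2 \<ge> 0" by simp
  ultimately show ?thesis by linarith
qed

lemma dlt_bond:
  assumes "is_density N f" "x \<in> {0..<int N}"
  shows "dlt N f (Transposition.transpose x ((x + 1) mod int N)) \<le> 2 * sqrt (2 * Dirichlet N f)"
proof -
  define t where "t = Transposition.transpose x ((x + 1) mod int N)"
  have tp: "t permutes {0..<int N}" unfolding t_def using assms(2)
    by (intro permutes_swap_id) auto
  have fpos: "\<And>\<eta>. \<eta> \<in> Omega N \<Longrightarrow> f \<eta> \<ge> 0" using assms(1) unfolding is_density_def by auto
  have fpos2: "\<And>\<eta>. \<eta> \<in> Omega N \<Longrightarrow> f (\<eta> \<circ> t) \<ge> 0" using fpos Omega_comp[OF tp] by auto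
  define u where "u \<eta> = sqrt ((1/3)^N) * \<bar>sqrt (f (\<eta> \<circ> t)) - sqrt (f \<eta>)\<bar>" for \<eta>
  define v where "v \<eta> = sqrt ((1/3)^N) * (sqrt (f (\<eta> \<circ> t)) + sqrt (f \<eta>))" for \<eta>
  have eq: "\<bar>f (\<eta> \<circ> t) - f \<eta>\<bar> * (1/3)^N = u \<eta> * v \<eta>" if "\<eta> \<in> Omega N" for \<eta>
  proof -
    have "f (\<eta> \<circ> t) - f \<eta> = (sqrt (f (\<eta> \<circ> t)) - sqrt (f \<eta>)) * (sqrt (f (\<eta> \<circ> t)) + sqrt (f \<eta>))"
      using fpos[OF that] fpos2[OF that] by (simp add: algebra_simps)
    moreover have "sqrt (f (\<eta> \<circ> t)) + sqrt (f \<eta>) \<ge> 0" using fpos[OF that] fpos2[OF that] by simp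
    ultimately have A: "\<bar>f (\<eta> \<circ> t) - f \<eta>\<bar> = \<bar>sqrt (f (\<eta> \<circ> t)) - sqrt (f \<eta>)\<bar> * (sqrt (f (\<eta> \<circ> t)) + sqrt (f \<eta>))"
      by (simp add: abs_mult)
    have "u \<eta> * v \<eta> = (sqrt ((1/3)^N) * sqrt ((1/3)^N)) * (\<bar>sqrt (f (\<eta> \<circ> t)) - sqrt (f \<eta>)\<bar> * (sqrt (f (\<eta> \<circ> t)) + sqrt (f \<eta>)))"
      unfolding u_def v_def by (simp only: mult_ac)
    also have "sqrt ((1/3)^N) * sqrt ((1/3)^N) = ((1/3::real)^N)" by simp
    finally have UV: "u \<eta> * v \<eta> = (1/3)^N * (\<bar>sqrt (f (\<eta> \<circ> t)) - sqrt (f \<eta>)\<bar> * (sqrt (f (\<eta> \<circ> t)) + sqrt (f \<eta>)))" .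
    show ?thesis unfolding A UV by (rule mult.commute)
  qed
  have d: "dlt N f t = (\<Sum>\<eta>\<in>Omega N. u \<eta> * v \<eta>)" unfolding dlt_def using eq by simp
  have "(\<Sum>\<eta>\<in>Omega N. (u \<eta>)\<^sup>2) = (\<Sum>\<eta>\<in>Omega N. (1/3)^N * (sqrt (f (\<eta> \<circ> t)) - sqrt (f \<eta>))\<^sup>2)"
    unfolding u_def by (simp add: power_mult_distrib)
  also have "\<dots> \<le> 2 * Dirichlet N f" unfolding t_def by (rule Dirichlet_single[OF assms])
  finally have U: "(\<Sum>\<eta>\<in>Omega N. (u \<eta>)\<^sup>2) \<le> 2 * Dirichlet N f" .
  have D0: "0 \<le> 2 * Dirichlet N f" using U sum_nonneg[of "Omega N" "\<lambda>\<eta>. (u \<eta>)\<^sup>2"] by simp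
  have "(\<Sum>\<eta>\<in>Omega N. (v \<eta>)\<^sup>2) \<le> (\<Sum>\<eta>\<in>Omega N. 2 * (f (\<eta> \<circ> t) * (1/3)^N) + 2 * (f \<eta> * (1/3)^N))"
  proof (intro sum_mono)
    fix \<eta> assume e: "\<eta> \<in> Omega N"
    have "(v \<eta>)\<^sup>2 = (1/3)^N * (sqrt (f (\<eta> \<circ> t)) + sqrt (f \<eta>))\<^sup>2" unfolding v_def by (simp add: power_mult_distrib)
    also have "(sqrt (f (\<eta> \<circ> t)) + sqrt (f \<eta>))\<^sup>2 \<le> 2 * f (\<eta> \<circ> t) + 2 * f \<eta>"
      using sq_sum_le[OF fpos2[OF e] fpos[OF e]] .
    finally show "(v \<eta>)\<^sup>2 \<le> 2 * (f (\<eta> \<circ> t) * (1/3)^N) + 2 * (f \<eta> * (1/3)^N)"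
      by (simp add: algebra_simps)
  qed
  also have "\<dots> = 2 * (\<Sum>\<eta>\<in>Omega N. f (\<eta> \<circ> t) * (1/3)^N) + 2 * (\<Sum>\<eta>\<in>Omega N. f \<eta> * (1/3)^N)"
    by (simp add: sum.distrib sum_distrib_left)
  also have "\<dots> = 4"
    using assms(1) sum_perm[OF tp, of "\<lambda>\<eta>. f \<eta> * (1/3)^N"] unfolding is_density_def
    by simp
  finally have V: "(\<Sum>\<eta>\<in>Omega N. (v \<eta>)\<^sup>2) \<le> 4" .
  have "(dlt N f t)\<^sup>2 \<le> (\<Sum>\<eta>\<in>Omega N. (u \<eta>)\<^sup>2) * (\<Sum>\<eta>\<in>Omega N. (v \<eta>)\<^sup>2)"
    unfolding d by (rule Cauchy_Schwarz_ineq_sum)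
  also have "\<dots> \<le> (2 * Dirichlet N f) * 4"
    using U V D0 by (intro mult_mono) (auto intro: sum_nonneg)
  also have "\<dots> = (2 * sqrt (2 * Dirichlet N f))\<^sup>2"
  proof -
    from D0 show ?thesis by (simp add: power_mult_distrib)
  qed
  finally have "(dlt N f t)\<^sup>2 \<le> (2 * sqrt (2 * Dirichlet N f))\<^sup>2" .
  then show ?thesis unfolding t_def[symmetric]
    by (rule power2_le_imp_le) (use D0 in simp)
qed

lemma tr_permutes: "a \<in> {0..<int N} \<Longrightarrow> b \<in> {0..<int N} \<Longrightarrow> Transposition.transpose a b permutes {0..<int N}"
  by (rule permutes_swap_id)

lemma dlt_path:
  assumes bond: "\<And>x. x \<in> {0..<int N} \<Longrightarrow> dlt N f (Transposition.transpose x ((x + 1) mod int N)) \<le> \<beta>"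
    and "1 \<le> d" "d < N"
  shows "dlt N f (Transposition.transpose (z mod int N) ((z + int d) mod int N)) \<le> (2 * real d - 1) * \<beta>"
  using assms(2,3)
proof (induction d rule: dec_induct)
  case base
  have "((z mod int N) + 1) mod int N = (z + 1) mod int N" by (simp add: mod_simps)
  then show ?case using bond[of "z mod int N"] base by simp
next
  case (step d)
  have Np: "int N > 0" using step by auto
  define a where "a = z mod int N"
  define b where "b = (z + int d) mod int N"
  define c where "c = (z + int (Suc d)) mod int N"
  have inN: "a \<in> {0..<int N}" "b \<in> {0..<int N}" "c \<in> {0..<int N}" unfolding a_def b_def c_def using Np by auto
  have ac: "a \<noteq> c"
  proof
    assume "a = c"
    then have "int N dvd (z + int (Suc d)) - z" using mod_eq_dvd_iff[of "z + int (Suc d)" "int N" z] unfolding a_def c_def by auto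
    then have "int N dvd int (Suc d)" by simp
    then have "int N \<le> int (Suc d)" by (rule zdvd_imp_le) simp
    then show False using step by simp
  qed
  have bc: "b \<noteq> c"
  proof
    assume "b = c"
    then have "int N dvd (z + int (Suc d)) - (z + int d)" using mod_eq_dvd_iff[of "z + int (Suc d)" "int N" "z + int d"] unfolding b_def c_def by auto
    then have "int N dvd 1" by simp
    then have "int N \<le> 1" by (rule zdvd_imp_le) simp
    then show False using step by simp
  qed
  have ab: "a \<noteq> b"
  proof
    assume "a = b"
    then have "int N dvd (z + int d) - z" using mod_eq_dvd_iff[of "z + int d" "int N" z] unfolding a_def b_def by auto
    then have "int N dvd int d" by simp
    then have "int N \<le> int d" by (rule zdvd_imp_le) (use step in simp)
    then show False using step by simp
  qed
  have bnd: "Transposition.transpose b c = Transposition.transpose b ((b + 1) mod int N)"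
  proof -
    have "((z + int d) mod int N + 1) mod int N = (z + int (Suc d)) mod int N"
      by (simp add: mod_simps algebra_simps)
    then show ?thesis unfolding b_def c_def by simp
  qed
  have eq: "Transposition.transpose a c = Transposition.transpose b c \<circ> Transposition.transpose a b \<circ> Transposition.transpose b c"
  proof -
    have "Transposition.transpose b c \<circ> Transposition.transpose a b \<circ> Transposition.transpose b c
        = Transposition.transpose c b \<circ> Transposition.transpose b a \<circ> Transposition.transpose c b"
      by (simp add: transpose_commute)
    also have "\<dots> = Transposition.transpose c a" using ac bc ab by (intro transpose_comp_triple) auto
    finally show ?thesis by (simp add: transpose_commute)
  qed
  have p1: "Transposition.transpose b c permutes {0..<int N}" "Transposition.transpose a b permutes {0..<int N}"
    using inN by (auto intro: tr_permutes)
  have "dlt N f (Transposition.transpose a c) \<le> dlt N f (Transposition.transpose b c \<circ> Transposition.transpose a b) + dlt N f (Transposition.transpose b c)"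
    unfolding eq by (rule dlt_comp) (use p1 in \<open>auto intro: permutes_compose\<close>)
  also have "\<dots> \<le> dlt N f (Transposition.transpose b c) + dlt N f (Transposition.transpose a b) + dlt N f (Transposition.transpose b c)"
    using dlt_comp[OF p1] by simp
  also have "\<dots> \<le> \<beta> + (2 * real d - 1) * \<beta> + \<beta>"
  proof -
    have "dlt N f (Transposition.transpose b c) \<le> \<beta>" unfolding bnd by (rule bond[OF inN(2)])
    moreover have "dlt N f (Transposition.transpose a b) \<le> (2 * real d - 1) * \<beta>"
      unfolding a_def b_def using step by simp
    ultimately show ?thesis by linarith
  qed
  finally show ?case unfolding a_def c_def by (simp add: algebra_simps)
qed

lemma dlt_perm:
  assumes "finite Q" "Q \<subseteq> {0..<int N}" "p permutes Q"
    and "\<And>a b. a \<in> Q \<Longrightarrow> b \<in> Q \<Longrightarrow> dlt N f (Transposition.transpose a b) \<le> K"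
  shows "dlt N f p \<le> real (card Q) * K"
  using assms
proof (induction Q arbitrary: p rule: finite_induct)
  case empty
  then have "p = id" by (simp add: permutes_empty)
  then show ?case using dlt_id[of N f] by (simp add: id_def)
next
  case (insert a F)
  define q where "q = Transposition.transpose a (p a) \<circ> p"
  have q: "q permutes F" unfolding q_def by (rule permutes_insert_lemma[OF insert.prems(2)])
  have IH: "dlt N f q \<le> real (card F) * K"
    using insert.IH[OF _ q] insert.prems by auto
  have pa: "p a \<in> insert a F" using permutes_in_image[OF insert.prems(2)] by simp
  have peq: "p = Transposition.transpose a (p a) \<circ> q" unfolding q_def
    by (simp add: fun_eq_iff)
  have tp: "Transposition.transpose a (p a) permutes {0..<int N}"
    using pa insert.prems(1) by (intro tr_permutes) auto
  have qp: "q permutes {0..<int N}" using permutes_subset[OF q] insert.prems(1) by auto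
  have "dlt N f p \<le> dlt N f (Transposition.transpose a (p a)) + dlt N f q"
    by (subst peq) (rule dlt_comp[OF tp qp])
  also have "\<dots> \<le> K + real (card F) * K"
    using insert.prems(3)[of a "p a"] pa IH by auto
  finally show ?case using insert.hyps by (simp add: algebra_simps)
qed

lemma dlt_symm:
  assumes "\<rho> permutes {0..<int N}" "is_density N f"
    and H: "\<And>\<eta>. \<eta> \<in> Omega N \<Longrightarrow> \<bar>h \<eta>\<bar> \<le> H"
  shows "\<bar>(\<Sum>\<eta>\<in>Omega N. h (\<eta> \<circ> \<rho>) * f \<eta> * (1/3)^N) - (\<Sum>\<eta>\<in>Omega N. h \<eta> * f \<eta> * (1/3)^N)\<bar> \<le> H * dlt N f \<rho>"
proof -
  have "(\<Sum>\<eta>\<in>Omega N. h \<eta> * f \<eta> * (1/3)^N) = (\<Sum>\<eta>\<in>Omega N. h (\<eta> \<circ> \<rho>) * f (\<eta> \<circ> \<rho>) * (1/3)^N)"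
    using sum_perm[OF assms(1), of "\<lambda>\<eta>. h \<eta> * f \<eta> * (1/3)^N"] by simp
  then have "\<bar>(\<Sum>\<eta>\<in>Omega N. h (\<eta> \<circ> \<rho>) * f \<eta> * (1/3)^N) - (\<Sum>\<eta>\<in>Omega N. h \<eta> * f \<eta> * (1/3)^N)\<bar>
     = \<bar>\<Sum>\<eta>\<in>Omega N. h (\<eta> \<circ> \<rho>) * (f \<eta> - f (\<eta> \<circ> \<rho>)) * (1/3)^N\<bar>"
    by (simp add: sum_subtractf[symmetric] algebra_simps)
  also have "\<dots> \<le> (\<Sum>\<eta>\<in>Omega N. \<bar>h (\<eta> \<circ> \<rho>) * (f \<eta> - f (\<eta> \<circ> \<rho>)) * (1/3)^N\<bar>)"
    by (rule sum_abs)
  also have "\<dots> \<le> (\<Sum>\<eta>\<in>Omega N. H * (\<bar>f (\<eta> \<circ> \<rho>) - f \<eta>\<bar> * (1/3)^N))"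
  proof (intro sum_mono)
    fix \<eta> assume e: "\<eta> \<in> Omega N"
    have "\<bar>h (\<eta> \<circ> \<rho>)\<bar> \<le> H" using H Omega_comp[OF assms(1) e] by auto
    then show "\<bar>h (\<eta> \<circ> \<rho>) * (f \<eta> - f (\<eta> \<circ> \<rho>)) * (1/3)^N\<bar> \<le> H * (\<bar>f (\<eta> \<circ> \<rho>) - f \<eta>\<bar> * (1/3)^N)"
      by (simp add: abs_mult abs_minus_commute mult.assoc mult_right_mono)
  qed
  also have "\<dots> = H * dlt N f \<rho>" unfolding dlt_def by (simp add: sum_distrib_left)
  finally show ?thesis .
qed

lemma perm_extend:
  assumes "finite B" "A \<subseteq> B" "inj_on u A" "u ` A \<subseteq> B"
  shows "\<exists>\<sigma>. \<sigma> permutes B \<and> (\<forall>a\<in>A. \<sigma> a = u a)"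
proof -
  have fA: "finite A" using assms finite_subset by auto
  have "card (B - A) = card (B - u ` A)"
    using assms fA by (simp add: card_Diff_subset card_image)
  then obtain g where g: "bij_betw g (B - A) (B - u ` A)"
    using finite_same_card_bij assms(1) by (metis finite_Diff)
  define \<sigma> where "\<sigma> x = (if x \<in> A then u x else if x \<in> B then g x else x)" for x
  have b1: "bij_betw \<sigma> A (u ` A)"
    using assms(3) unfolding bij_betw_def \<sigma>_def inj_on_def by auto
  have b2: "bij_betw \<sigma> (B - A) (B - u ` A)"
    using g unfolding \<sigma>_def by (rule bij_betw_cong[THEN iffD1, rotated]) auto
  have "bij_betw \<sigma> (A \<union> (B - A)) (u ` A \<union> (B - u ` A))"
    by (rule bij_betw_combine[OF b1 b2]) auto
  moreover have "A \<union> (B - A) = B" "u ` A \<union> (B - u ` A) = B" using assms by auto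
  ultimately have "bij_betw \<sigma> B B" by simp
  moreover have "\<And>x. x \<notin> B \<Longrightarrow> \<sigma> x = x" unfolding \<sigma>_def using assms by auto
  ultimately have "\<sigma> permutes B" by (rule bij_imp_permutes)
  then show ?thesis unfolding \<sigma>_def by auto
qed

lemma avg_diff_bound:
  fixes h :: "'a \<Rightarrow> real"
  assumes "finite V" "W \<subseteq> V" "W \<noteq> {}" "\<And>v. v \<in> V \<Longrightarrow> \<bar>h v\<bar> \<le> M"
  shows "\<bar>(\<Sum>v\<in>W. h v) / card W - (\<Sum>v\<in>V. h v) / card V\<bar> \<le> 2 * M * card (V - W) / card V"
proof -
  have fW: "finite W" using assms finite_subset by auto
  define a where "a = (\<Sum>v\<in>W. h v)"
  define b where "b = (\<Sum>v\<in>V - W. h v)"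
  define p where "p = real (card W)"
  define q where "q = real (card (V - W))"
  have p0: "p > 0" unfolding p_def using fW assms(3) by (simp add: card_gt_0_iff)
  have q0: "q \<ge> 0" unfolding q_def by simp
  have cV: "real (card V) = p + q" unfolding p_def q_def
    using card_Diff_subset[OF fW assms(2)] card_mono[OF assms(1,2)] by simp
  have sV: "(\<Sum>v\<in>V. h v) = a + b" unfolding a_def b_def
    using sum.subset_diff[OF assms(2,1)] by (simp add: add.commute)
  have M0: "M \<ge> 0" using assms(3,4,2) by fastforce
  have ha: "\<bar>a\<bar> \<le> M * p" unfolding a_def p_def
  proof -
    have "\<bar>sum h W\<bar> \<le> (\<Sum>v\<in>W. \<bar>h v\<bar>)" by (rule sum_abs)
    also have "\<dots> \<le> (\<Sum>v\<in>W. M)" using assms(2,4) by (intro sum_mono) auto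
    finally show "\<bar>sum h W\<bar> \<le> M * real (card W)" by (simp add: mult.commute)
  qed
  have hb: "\<bar>b\<bar> \<le> M * q" unfolding b_def q_def
  proof -
    have "\<bar>sum h (V - W)\<bar> \<le> (\<Sum>v\<in>V - W. \<bar>h v\<bar>)" by (rule sum_abs)
    also have "\<dots> \<le> (\<Sum>v\<in>V - W. M)" using assms(4) by (intro sum_mono) auto
    finally show "\<bar>sum h (V - W)\<bar> \<le> M * real (card (V - W))" by (simp add: mult.commute)
  qed
  have "a / p - (a + b) / (p + q) = (a * q - b * p) / (p * (p + q))"
    using p0 q0 by (simp add: field_simps)
  moreover have "\<bar>a * q - b * p\<bar> \<le> 2 * M * p * q"
  proof -
    have "\<bar>a * q\<bar> \<le> M * p * q" using ha q0 by (simp add: abs_mult mult_right_mono)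
    moreover have "\<bar>b * p\<bar> \<le> M * q * p" using hb p0 by (simp add: abs_mult mult_right_mono)
    ultimately show ?thesis by (simp add: algebra_simps)
  qed
  moreover have "p * (p + q) > 0" using p0 q0 by simp
  ultimately have "\<bar>a / p - (a + b) / (p + q)\<bar> \<le> 2 * M * p * q / (p * (p + q))"
    by (metis abs_divide abs_of_pos divide_right_mono less_imp_le)
  also have "\<dots> = 2 * M * q / (p + q)" using p0 q0 by (simp add: divide_simps)
  finally show ?thesis unfolding a_def[symmetric] p_def[symmetric] q_def[symmetric] cV sV .
qed

lemma restrict_eq_iff: "restrict f I = restrict g I \<longleftrightarrow> (\<forall>i\<in>I. f i = g i)"
  by (auto simp: restrict_def fun_eq_iff)

lemma perm_avg_inj:
  fixes \<iota> :: "'i \<Rightarrow> 'b" and h :: "('i \<Rightarrow> 'b) \<Rightarrow> real"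
  assumes B: "finite B" and I: "finite I" "inj_on \<iota> I" "\<iota> ` I \<subseteq> B"
    and loc: "\<And>v v'. (\<forall>i\<in>I. v i = v' i) \<Longrightarrow> h v = h v'"
  defines "Inj \<equiv> {v \<in> PiE I (\<lambda>_. B). inj_on v I}"
  shows "(\<Sum>\<pi>\<in>{\<pi>. \<pi> permutes B}. h (\<pi> \<circ> \<iota>)) / card {\<pi>. \<pi> permutes B} = (\<Sum>v\<in>Inj. h v) / card Inj"
proof -
  define Perm where "Perm = {\<pi>. \<pi> permutes B}"
  have fP: "finite Perm" unfolding Perm_def using B by (rule finite_permutations)
  have fInj: "finite Inj" unfolding Inj_def using B I by (intro finite_subset[OF _ finite_PiE[of I "\<lambda>_. B"]]) auto
  define \<Phi> where "\<Phi> \<pi> = restrict (\<pi> \<circ> \<iota>) I" for \<pi> :: "'b \<Rightarrow> 'b"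
  define Fib where "Fib v = {\<pi> \<in> Perm. \<Phi> \<pi> = v}" for v
  have PhiInj: "\<Phi> \<pi> \<in> Inj" if "\<pi> \<in> Perm" for \<pi>
  proof -
    have p: "\<pi> permutes B" using that unfolding Perm_def by simp
    have "\<pi> (\<iota> i) \<in> B" if "i \<in> I" for i using that I(3) permutes_in_image[OF p] by auto
    moreover have "inj_on (\<pi> \<circ> \<iota>) I" using I(2) permutes_inj[OF p] by (simp add: comp_inj_on inj_on_subset)
    ultimately show ?thesis unfolding Inj_def \<Phi>_def
      by (auto simp: inj_on_def)
  qed
  have hPhi: "h (\<pi> \<circ> \<iota>) = h (\<Phi> \<pi>)" for \<pi> unfolding \<Phi>_def by (rule loc) simp
  define v0 where "v0 = \<Phi> id"
  have idFib: "id \<in> Fib v0" unfolding Fib_def v0_def Perm_def by (simp add: permutes_id)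
  have fib_card: "card (Fib v) = card (Fib v0)" if v: "v \<in> Inj" for v
  proof -
    have vP: "v \<in> PiE I (\<lambda>_. B)" and vi: "inj_on v I" using v unfolding Inj_def by auto
    define u where "u = v \<circ> inv_into I \<iota>"
    have "inj_on u (\<iota> ` I)" unfolding u_def using vi I(2)
      by (simp add: comp_inj_on inj_on_inv_into inv_into_image_cancel)
    moreover have "u ` (\<iota> ` I) \<subseteq> B" unfolding u_def using vP I(2) by (auto simp: PiE_iff)
    ultimately obtain \<sigma> where \<sigma>: "\<sigma> permutes B" "\<forall>a\<in>\<iota> ` I. \<sigma> a = u a"
      using perm_extend[OF B I(3)] by blast
    have \<sigma>i: "\<sigma> (\<iota> i) = v i" if "i \<in> I" for i using \<sigma>(2) that I(2) unfolding u_def by auto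
    have "Fib v = (\<lambda>\<pi>. \<sigma> \<circ> \<pi>) ` Fib v0"
    proof
      show "(\<lambda>\<pi>. \<sigma> \<circ> \<pi>) ` Fib v0 \<subseteq> Fib v"
      proof
        fix \<pi>' assume "\<pi>' \<in> (\<lambda>\<pi>. \<sigma> \<circ> \<pi>) ` Fib v0"
        then obtain \<pi> where \<pi>: "\<pi> \<in> Fib v0" "\<pi>' = \<sigma> \<circ> \<pi>" by auto
        have pp: "\<pi> permutes B" and pe: "\<forall>i\<in>I. \<pi> (\<iota> i) = \<iota> i"
          using \<pi>(1) unfolding Fib_def Perm_def v0_def \<Phi>_def by (auto simp: restrict_eq_iff)
        have "\<pi>' permutes B" using \<pi>(2) pp \<sigma>(1) by (simp add: permutes_compose)
        moreover have "\<Phi> \<pi>' = v"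
        proof -
          have "\<Phi> \<pi>' = restrict v I" unfolding \<Phi>_def \<pi>(2) restrict_eq_iff using pe \<sigma>i by simp
          also have "\<dots> = v" using vP by (simp add: PiE_iff extensional_restrict)
          finally show ?thesis .
        qed
        ultimately show "\<pi>' \<in> Fib v" unfolding Fib_def Perm_def by simp
      qed
      show "Fib v \<subseteq> (\<lambda>\<pi>. \<sigma> \<circ> \<pi>) ` Fib v0"
      proof
        fix \<pi>' assume pf: "\<pi>' \<in> Fib v"
        have pp: "\<pi>' permutes B" and pe: "\<forall>i\<in>I. \<pi>' (\<iota> i) = v i"
          using pf unfolding Fib_def Perm_def \<Phi>_def
          by (auto simp: restrict_eq_iff[symmetric] PiE_iff extensional_restrict vP)
        define \<pi> where "\<pi> = inv \<sigma> \<circ> \<pi>'"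
        have "\<pi> permutes B" unfolding \<pi>_def using pp permutes_inv[OF \<sigma>(1)] by (simp add: permutes_compose)
        moreover have "\<Phi> \<pi> = v0"
          unfolding \<Phi>_def v0_def restrict_eq_iff \<pi>_def
        proof
          fix i assume i: "i \<in> I"
          have "\<pi>' (\<iota> i) = \<sigma> (\<iota> i)" using pe \<sigma>i i by simp
          then show "(inv \<sigma> \<circ> \<pi>' \<circ> \<iota>) i = (id \<circ> \<iota>) i"
            using permutes_inverses(2)[OF \<sigma>(1)] by simp
        qed
        ultimately have "\<pi> \<in> Fib v0" unfolding Fib_def Perm_def by simp
        moreover have "\<pi>' = \<sigma> \<circ> \<pi>" unfolding \<pi>_def using permutes_inverses(1)[OF \<sigma>(1)]
          by (simp add: fun_eq_iff)
        ultimately show "\<pi>' \<in> (\<lambda>\<pi>. \<sigma> \<circ> \<pi>) ` Fib v0" by blast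
      qed
    qed
    moreover have "inj_on (\<lambda>\<pi>. \<sigma> \<circ> \<pi>) (Fib v0)"
      using permutes_inj[OF \<sigma>(1)] by (auto simp: inj_on_def fun_eq_iff inj_def)
    ultimately show ?thesis by (simp add: card_image)
  qed
  define K where "K = card (Fib v0)"
  have K0: "K > 0" unfolding K_def using idFib fP unfolding Fib_def by (auto simp: card_gt_0_iff)
  have grp: "(\<Sum>\<pi>\<in>Perm. g (\<Phi> \<pi>)) = real K * (\<Sum>v\<in>Inj. g v)" for g :: "('i \<Rightarrow> 'b) \<Rightarrow> real"
  proof -
    have "(\<Sum>\<pi>\<in>Perm. g (\<Phi> \<pi>)) = (\<Sum>v\<in>Inj. \<Sum>\<pi>\<in>{\<pi>. \<pi> \<in> Perm \<and> \<Phi> \<pi> = v}. g (\<Phi> \<pi>))"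
      by (rule sum.group[symmetric]) (use fP fInj PhiInj in auto)
    also have "\<dots> = (\<Sum>v\<in>Inj. real (card (Fib v)) * g v)"
      by (intro sum.cong refl) (simp add: Fib_def)
    also have "\<dots> = (\<Sum>v\<in>Inj. real K * g v)"
      using fib_card unfolding K_def by simp
    finally show ?thesis by (simp add: sum_distrib_left)
  qed
  have "(\<Sum>\<pi>\<in>Perm. h (\<pi> \<circ> \<iota>)) = real K * (\<Sum>v\<in>Inj. h v)"
    unfolding hPhi by (rule grp)
  moreover have "real (card Perm) = real K * real (card Inj)"
    using grp[of "\<lambda>_. 1"] by simp
  ultimately show ?thesis using K0 unfolding Perm_def by simp
qed

lemma card_PiE_const: "finite I \<Longrightarrow> card (PiE I (\<lambda>_. B)) = card B ^ card I"
  by (simp add: card_PiE)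

lemma noninj_card:
  assumes B: "finite B" and I: "finite I"
  shows "card (PiE I (\<lambda>_. B) - {v \<in> PiE I (\<lambda>_. B). inj_on v I}) \<le> card I * card I * card B ^ (card I - 1)"
proof -
  define V where "V = PiE I (\<lambda>_. B)"
  define E where "E a b = {v \<in> V. v a = v b}" for a b
  have sub: "V - {v \<in> V. inj_on v I} \<subseteq> (\<Union>a\<in>I. \<Union>b\<in>I - {a}. E a b)"
    unfolding E_def inj_on_def by auto
  have cE: "card (E a b) \<le> card B ^ (card I - 1)" if ab: "a \<in> I" "b \<in> I - {a}" for a b
  proof -
    have "inj_on (\<lambda>v. restrict v (I - {b})) (E a b)"
    proof (rule inj_onI)
      fix v w assume v: "v \<in> E a b" and w: "w \<in> E a b" and eq: "restrict v (I - {b}) = restrict w (I - {b})"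
      have agree: "\<forall>i\<in>I - {b}. v i = w i" using eq by (simp add: restrict_eq_iff)
      have "v b = w b" using v w agree ab unfolding E_def by auto
      then have "\<forall>i\<in>I. v i = w i" using agree by auto
      moreover have "v \<in> extensional I" "w \<in> extensional I" using v w unfolding E_def V_def by (auto simp: PiE_iff)
      ultimately show "v = w" by (auto intro: extensionalityI)
    qed
    moreover have "(\<lambda>v. restrict v (I - {b})) ` E a b \<subseteq> PiE (I - {b}) (\<lambda>_. B)"
    proof (rule image_subsetI)
      fix v assume "v \<in> E a b"
      then have "\<forall>i\<in>I - {b}. v i \<in> B" unfolding E_def V_def by (auto simp: PiE_iff)
      then show "restrict v (I - {b}) \<in> PiE (I - {b}) (\<lambda>_. B)" by (simp only: restrict_PiE_iff)
    qed
    ultimately have "card (E a b) \<le> card (PiE (I - {b}) (\<lambda>_. B))"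
      using card_inj_on_le[OF _ _ finite_PiE] B I by (metis finite_Diff)
    also have "\<dots> = card B ^ (card I - 1)" using I ab by (simp add: card_PiE_const)
    finally show ?thesis .
  qed
  have "card (V - {v \<in> V. inj_on v I}) \<le> card (\<Union>a\<in>I. \<Union>b\<in>I - {a}. E a b)"
    using sub I B unfolding E_def V_def by (intro card_mono) (auto intro!: finite_PiE)
  also have "\<dots> \<le> (\<Sum>a\<in>I. card (\<Union>b\<in>I - {a}. E a b))" using I by (rule card_UN_le)
  also have "\<dots> \<le> (\<Sum>a\<in>I. \<Sum>b\<in>I - {a}. card (E a b))" using I by (intro sum_mono card_UN_le) auto
  also have "\<dots> \<le> (\<Sum>a\<in>I. \<Sum>b\<in>I - {a}. card B ^ (card I - 1))" using cE by (intro sum_mono) auto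
  also have "\<dots> \<le> (\<Sum>a\<in>I. \<Sum>b\<in>I. card B ^ (card I - 1))" using I by (intro sum_mono sum_mono2) auto
  also have "\<dots> = card I * card I * card B ^ (card I - 1)" by simp
  finally show ?thesis unfolding V_def .
qed

lemma perm_vs_all:
  fixes \<iota> :: "'i \<Rightarrow> 'b" and h :: "('i \<Rightarrow> 'b) \<Rightarrow> real"
  assumes B: "finite B" "card B > 0" and I: "finite I" "inj_on \<iota> I" "\<iota> ` I \<subseteq> B"
    and loc: "\<And>v v'. (\<forall>i\<in>I. v i = v' i) \<Longrightarrow> h v = h v'"
    and bnd: "\<And>v. v \<in> PiE I (\<lambda>_. B) \<Longrightarrow> \<bar>h v\<bar> \<le> M"
  shows "\<bar>(\<Sum>\<pi>\<in>{\<pi>. \<pi> permutes B}. h (\<pi> \<circ> \<iota>)) / fact (card B) - (\<Sum>v\<in>PiE I (\<lambda>_. B). h v) / card B ^ card I\<bar>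
      \<le> 2 * M * card I ^ 2 / card B"
proof -
  define V where "V = PiE I (\<lambda>_. B)"
  define Inj where "Inj = {v \<in> V. inj_on v I}"
  define m where "m = card B"
  define j where "j = card I"
  have m0: "m > 0" unfolding m_def using B by simp
  have fV: "finite V" unfolding V_def using B I by (simp add: finite_PiE)
  have cV: "card V = m ^ j" unfolding V_def m_def j_def using I by (simp add: card_PiE_const)
  have InjV: "Inj \<subseteq> V" unfolding Inj_def by auto
  have Inj0: "Inj \<noteq> {}"
  proof -
    have "restrict \<iota> I \<in> Inj" unfolding Inj_def V_def using I by (auto simp: inj_on_def)
    then show ?thesis by auto
  qed
  have A: "(\<Sum>\<pi>\<in>{\<pi>. \<pi> permutes B}. h (\<pi> \<circ> \<iota>)) / fact (card B) = (\<Sum>v\<in>Inj. h v) / card Inj"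
    using perm_avg_inj[OF B(1) I loc] card_permutations[OF refl B(1)] unfolding Inj_def V_def by simp
  have "\<bar>(\<Sum>v\<in>Inj. h v) / card Inj - (\<Sum>v\<in>V. h v) / card V\<bar> \<le> 2 * M * card (V - Inj) / card V"
    by (rule avg_diff_bound[OF fV InjV Inj0]) (use bnd V_def in auto)
  also have "\<dots> \<le> 2 * M * (j * j * m ^ (j - 1)) / m ^ j"
  proof -
    have M0: "M \<ge> 0" using bnd Inj0 InjV unfolding V_def by (meson abs_ge_zero order.trans subset_iff ex_in_conv)
    have "card (V - Inj) \<le> j * j * m ^ (j - 1)"
      using noninj_card[OF B(1) I(1)] unfolding V_def Inj_def j_def m_def .
    then have "real (card (V - Inj)) \<le> real j * real j * real m ^ (j - 1)"
      by (metis of_nat_le_iff of_nat_mult of_nat_power)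
    then show ?thesis unfolding cV using M0 m0
      by (intro divide_right_mono mult_left_mono) auto
  qed
  also have "\<dots> \<le> 2 * M * j ^ 2 / m"
  proof (cases "j = 0")
    case True then show ?thesis by simp
  next
    case False
    then have "real m ^ j = real m * real m ^ (j - 1)" by (metis power_eq_if of_nat_power)
    then show ?thesis using m0 by (simp add: power2_eq_square)
  qed
  finally have X: "\<bar>(\<Sum>v\<in>Inj. h v) / card Inj - (\<Sum>v\<in>V. h v) / card V\<bar> \<le> 2 * M * j ^ 2 / m" .
  have "real (card V) = real (card B) ^ card I" using cV unfolding m_def j_def by simp
  with X show ?thesis unfolding A V_def m_def j_def by simp
qed

definition Tset :: "int set \<Rightarrow> (int \<Rightarrow> nat) set" where
  "Tset S = PiE S (\<lambda>_. {0,1,2::nat})"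

definition Mphi :: "int set \<Rightarrow> ((int \<Rightarrow> nat) \<Rightarrow> real) \<Rightarrow> real" where
  "Mphi S \<phi> = (\<Sum>t\<in>Tset S. \<bar>\<phi> t\<bar>)"

definition dn :: "nat \<Rightarrow> (int \<Rightarrow> nat) \<Rightarrow> nat \<Rightarrow> real" where
  "dn k \<xi> a = (1 / (2 * real k + 1)) * (\<Sum>z\<in>{-int k..int k}. if \<xi> z = a then 1 else 0)"

definition Gx :: "int set \<Rightarrow> ((int \<Rightarrow> nat) \<Rightarrow> real) \<Rightarrow> nat \<Rightarrow> (int \<Rightarrow> nat) \<Rightarrow> real" where
  "Gx S \<phi> k \<xi> = phi_tilde S \<phi> (dn k \<xi> 1) (dn k \<xi> 2)"

definition good :: "(int \<Rightarrow> nat) \<Rightarrow> bool" where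
  "good \<xi> \<longleftrightarrow> (\<forall>z. \<xi> z < 3)"

lemma card_box: "card {-int k..int k} = 2 * k + 1"
  by simp

lemma finite_Tset: "finite S \<Longrightarrow> finite (Tset S)"
  unfolding Tset_def by (simp add: finite_PiE)

lemma sum_ind_card: "(\<Sum>z\<in>A. if P z then 1 else 0 :: real) = real (card {z\<in>A. P z})" if "finite A"
  using that by (simp add: sum.If_cases Int_def)

context
  fixes S :: "int set" and \<phi> :: "(int \<Rightarrow> nat) \<Rightarrow> real"
  assumes lf: "local_fun S \<phi>"
begin

lemma finS: "finite S" using lf unfolding local_fun_def by simp

lemma loc: "(\<And>x. x \<in> S \<Longrightarrow> \<sigma> x = \<sigma>' x) \<Longrightarrow> \<phi> \<sigma> = \<phi> \<sigma>'"
  using lf unfolding local_fun_def by blast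

lemma restrict_T: "restrict \<sigma> S \<in> Tset S" if "\<And>s. s \<in> S \<Longrightarrow> \<sigma> s < 3"
proof -
  have "\<And>n::nat. n < 3 \<Longrightarrow> n \<in> {0,1,2}" by auto
  then show ?thesis using that unfolding Tset_def by (auto simp: PiE_iff)
qed

lemma phi_bnd:
  assumes "\<And>s. s \<in> S \<Longrightarrow> \<sigma> s < 3"
  shows "\<bar>\<phi> \<sigma>\<bar> \<le> Mphi S \<phi>"
proof -
  have "\<phi> \<sigma> = \<phi> (restrict \<sigma> S)" by (rule loc) simp
  moreover have "\<bar>\<phi> (restrict \<sigma> S)\<bar> \<le> Mphi S \<phi>"
    unfolding Mphi_def using restrict_T[OF assms] finite_Tset[OF finS]
    by (intro member_le_sum[where f="\<lambda>t. \<bar>\<phi> t\<bar>"]) auto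
  ultimately show ?thesis by simp
qed

lemma Mphi_nonneg: "Mphi S \<phi> \<ge> 0"
  unfolding Mphi_def by (intro sum_nonneg) auto

lemma ind_exp:
  assumes "\<And>s. s \<in> S \<Longrightarrow> \<sigma> s < 3"
  shows "\<phi> \<sigma> = (\<Sum>t\<in>Tset S. \<phi> t * (\<Prod>s\<in>S. if \<sigma> s = t s then 1 else 0))"
proof -
  define t0 where "t0 = restrict \<sigma> S"
  have t0T: "t0 \<in> Tset S" unfolding t0_def by (rule restrict_T[OF assms])
  have "(\<Sum>t\<in>Tset S. \<phi> t * (\<Prod>s\<in>S. if \<sigma> s = t s then 1 else 0)) = (\<Sum>t\<in>Tset S. if t = t0 then \<phi> t else 0)"
  proof (intro sum.cong refl)
    fix t assume tT: "t \<in> Tset S"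
    show "\<phi> t * (\<Prod>s\<in>S. if \<sigma> s = t s then 1 else 0) = (if t = t0 then \<phi> t else 0)"
    proof (cases "t = t0")
      case True
      then show ?thesis unfolding t0_def by simp
    next
      case False
      have "\<exists>s\<in>S. t s \<noteq> \<sigma> s"
      proof (rule ccontr)
        assume "\<not> ?thesis"
        then have "\<forall>s\<in>S. t s = t0 s" unfolding t0_def by simp
        moreover have "t \<in> extensional S" "t0 \<in> extensional S" using tT t0T unfolding Tset_def by (auto simp: PiE_iff)
        ultimately have "t = t0" by (auto intro: extensionalityI)
        then show False using False by simp
      qed
      then have "(\<Prod>s\<in>S. if \<sigma> s = t s then 1 else 0) = (0::real)"
        using finS by (auto intro!: prod_zero) (metis)
      then show ?thesis using False by simp
    qed
  qed
  also have "\<dots> = \<phi> t0" using t0T finite_Tset[OF finS] by (simp add: sum.delta)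
  also have "\<phi> t0 = \<phi> \<sigma>" unfolding t0_def by (rule loc) simp
  finally show ?thesis by simp
qed

end

lemma prod_ind_sum:
  fixes \<xi> :: "'b \<Rightarrow> nat" and u :: "'i \<Rightarrow> nat"
  assumes "finite I" "finite B"
  shows "(\<Sum>v\<in>PiE I (\<lambda>_. B). \<Prod>i\<in>I. if \<xi> (v i) = u i then 1 else 0 :: real)
         = (\<Prod>i\<in>I. real (card {b\<in>B. \<xi> b = u i}))"
proof -
  define W where "W = PiE I (\<lambda>i. {b\<in>B. \<xi> b = u i})"
  have WV: "W \<subseteq> PiE I (\<lambda>_. B)" unfolding W_def by (auto simp: PiE_iff)
  have "(\<Sum>v\<in>PiE I (\<lambda>_. B). \<Prod>i\<in>I. if \<xi> (v i) = u i then 1 else 0 :: real)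
      = (\<Sum>v\<in>PiE I (\<lambda>_. B). if v \<in> W then 1 else 0)"
  proof (intro sum.cong refl)
    fix v assume v: "v \<in> PiE I (\<lambda>_. B)"
    show "(\<Prod>i\<in>I. if \<xi> (v i) = u i then 1 else 0 :: real) = (if v \<in> W then 1 else 0)"
    proof (cases "v \<in> W")
      case True
      then have "\<forall>i\<in>I. \<xi> (v i) = u i" unfolding W_def by (auto simp: PiE_iff)
      then show ?thesis using True by simp
    next
      case False
      then have "\<exists>i\<in>I. \<xi> (v i) \<noteq> u i" using v unfolding W_def by (auto simp: PiE_iff)
      then show ?thesis using False assms(1) by (auto intro!: prod_zero)
    qed
  qed
  also have "\<dots> = real (card W)"
    using WV assms by (simp add: sum.If_cases finite_PiE Int_absorb1)
  also have "\<dots> = (\<Prod>i\<in>I. real (card {b\<in>B. \<xi> b = u i}))"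
    unfolding W_def using assms(1) by (simp add: card_PiE)
  finally show ?thesis .
qed


lemma cnt_sum:
  assumes "good \<xi>"
  shows "real (card {b\<in>{-int k..int k}. \<xi> b = 0}) + real (card {b\<in>{-int k..int k}. \<xi> b = 1})
       + real (card {b\<in>{-int k..int k}. \<xi> b = 2}) = 2 * real k + 1"
proof -
  have "(\<Sum>z\<in>{-int k..int k}. (if \<xi> z = 0 then 1 else 0) + (if \<xi> z = 1 then 1 else 0) + (if \<xi> z = 2 then 1 else 0 :: real))
      = (\<Sum>z\<in>{-int k..int k}. 1)"
  proof (intro sum.cong refl)
    fix z have "\<xi> z < 3" using assms unfolding good_def by auto
    then have "\<xi> z = 0 \<or> \<xi> z = 1 \<or> \<xi> z = 2" by auto
    then show "(if \<xi> z = 0 then 1 else 0) + (if \<xi> z = 1 then 1 else 0) + (if \<xi> z = 2 then 1 else 0 :: real) = 1"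
      by auto
  qed
  then show ?thesis by (simp add: sum.distrib sum_ind_card)
qed

lemma dn_eq: "dn k \<xi> a = real (card {b\<in>{-int k..int k}. \<xi> b = a}) / (2 * real k + 1)"
  unfolding dn_def by (simp add: sum_ind_card)

lemma aux_frac: "(m::real) > 0 \<Longrightarrow> c0 + c1 + c2 = m \<Longrightarrow> 1 - c1 / m - c2 / m = c0 / m"
proof -
  assume m: "m > 0" and c: "c0 + c1 + c2 = m"
  have "1 - c1 / m - c2 / m = (m - c1 - c2) / m" using m by (simp add: diff_divide_distrib)
  also have "m - c1 - c2 = c0" using c by simp
  finally show ?thesis .
qed

lemma sw_eq:
  assumes "good \<xi>" "a \<in> {0,1,2}"
  shows "site_weight a (dn k \<xi> 1) (dn k \<xi> 2) = real (card {b\<in>{-int k..int k}. \<xi> b = a}) / (2 * real k + 1)"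
proof -
  define m where "m = 2 * real k + 1"
  define c where "c a = real (card {b\<in>{-int k..int k}. \<xi> b = a})" for a
  have m: "m > 0" unfolding m_def by simp
  have cs: "c 0 + c 1 + c 2 = m" unfolding c_def m_def by (rule cnt_sum[OF assms(1)])
  have d: "dn k \<xi> a = c a / m" for a unfolding dn_eq c_def m_def ..
  have "site_weight a (c 1 / m) (c 2 / m) = c a / m"
    using assms(2) aux_frac[OF m cs] unfolding site_weight_def by auto
  then show ?thesis unfolding d c_def m_def .
qed

context
  fixes S :: "int set" and \<phi> :: "(int \<Rightarrow> nat) \<Rightarrow> real"
  assumes lf: "local_fun S \<phi>"
begin

lemma GF_ind:
  assumes "good \<xi>"
  shows "(\<Sum>t\<in>Tset S. \<phi> t * (\<Prod>s\<in>S. real (card {b\<in>{-int k..int k}. \<xi> b = t s}))) = (2*real k+1)^card S * Gx S \<phi> k \<xi>"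
proof -
  have m: "2 * real k + 1 > 0" by simp
  have "(2*real k+1)^card S * Gx S \<phi> k \<xi> = (\<Sum>t\<in>Tset S. \<phi> t * ((2*real k+1)^card S * (\<Prod>s\<in>S. site_weight (t s) (dn k \<xi> 1) (dn k \<xi> 2))))"
    unfolding Gx_def phi_tilde_def Tset_def by (simp add: sum_distrib_left algebra_simps)
  also have "\<dots> = (\<Sum>t\<in>Tset S. \<phi> t * (\<Prod>s\<in>S. real (card {b\<in>{-int k..int k}. \<xi> b = t s})))"
  proof (intro sum.cong refl arg_cong[where f="\<lambda>x. \<phi> _ * x"])
    fix t assume t: "t \<in> Tset S"
    have "(\<Prod>s\<in>S. site_weight (t s) (dn k \<xi> 1) (dn k \<xi> 2)) = (\<Prod>s\<in>S. real (card {b\<in>{-int k..int k}. \<xi> b = t s}) / (2 * real k + 1))"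
      using t assms unfolding Tset_def by (intro prod.cong refl sw_eq) (auto simp: PiE_iff)
    also have "\<dots> = (\<Prod>s\<in>S. real (card {b\<in>{-int k..int k}. \<xi> b = t s})) / (2 * real k + 1) ^ card S"
      by (simp add: prod_dividef)
    finally show "(2*real k+1)^card S * (\<Prod>s\<in>S. site_weight (t s) (dn k \<xi> 1) (dn k \<xi> 2)) = (\<Prod>s\<in>S. real (card {b\<in>{-int k..int k}. \<xi> b = t s}))"
      using m by simp
  qed
  finally show ?thesis by simp
qed

lemma GF:
  assumes "good \<xi>"
  shows "(\<Sum>v\<in>PiE S (\<lambda>_. {-int k..int k}). \<phi> (\<xi> \<circ> v)) = (2*real k+1)^card S * Gx S \<phi> k \<xi>"
proof -
  have fS: "finite S" by (rule finS[OF lf])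
  have "(\<Sum>v\<in>PiE S (\<lambda>_. {-int k..int k}). \<phi> (\<xi> \<circ> v))
     = (\<Sum>v\<in>PiE S (\<lambda>_. {-int k..int k}). \<Sum>t\<in>Tset S. \<phi> t * (\<Prod>s\<in>S. if \<xi> (v s) = t s then 1 else 0))"
    using assms unfolding good_def by (intro sum.cong refl) (subst ind_exp[OF lf], auto)
  also have "\<dots> = (\<Sum>t\<in>Tset S. \<phi> t * (\<Sum>v\<in>PiE S (\<lambda>_. {-int k..int k}). \<Prod>s\<in>S. if \<xi> (v s) = t s then 1 else 0))"
    by (simp add: sum.swap[of _ "Tset S"] sum_distrib_left)
  also have "\<dots> = (\<Sum>t\<in>Tset S. \<phi> t * (\<Prod>s\<in>S. real (card {b\<in>{-int k..int k}. \<xi> b = t s})))"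
    using fS by (simp add: prod_ind_sum)
  also have "\<dots> = (2*real k+1)^card S * Gx S \<phi> k \<xi>" by (rule GF_ind[OF assms])
  finally show ?thesis .
qed

lemma GF2:
  assumes "good \<xi>"
  shows "(\<Sum>v\<in>PiE (S <+> S) (\<lambda>_. {-int k..int k}). \<phi> (\<xi> \<circ> v \<circ> Inl) * \<phi> (\<xi> \<circ> v \<circ> Inr))
       = (2*real k+1)^card (S <+> S) * (Gx S \<phi> k \<xi>)\<^sup>2"
proof -
  have fS: "finite S" by (rule finS[OF lf])
  define B where "B = {-int k..int k}"
  define c where "c t = (\<Prod>s\<in>S. real (card {b\<in>B. \<xi> b = t s}))" for t :: "int \<Rightarrow> nat"
  define u where "u t t' = case_sum t t'" for t t' :: "int \<Rightarrow> nat"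
  have "(\<Sum>v\<in>PiE (S <+> S) (\<lambda>_. B). \<phi> (\<xi> \<circ> v \<circ> Inl) * \<phi> (\<xi> \<circ> v \<circ> Inr))
     = (\<Sum>v\<in>PiE (S <+> S) (\<lambda>_. B). \<Sum>t\<in>Tset S. \<Sum>t'\<in>Tset S. \<phi> t * \<phi> t' *
          (\<Prod>i\<in>S <+> S. if \<xi> (v i) = u t t' i then 1 else 0))"
  proof (intro sum.cong refl)
    fix v :: "int + int \<Rightarrow> int"
    have e1: "\<phi> (\<xi> \<circ> v \<circ> Inl) = (\<Sum>t\<in>Tset S. \<phi> t * (\<Prod>s\<in>S. if \<xi> (v (Inl s)) = t s then 1 else 0))"
      using assms unfolding good_def by (subst ind_exp[OF lf]) auto
    have e2: "\<phi> (\<xi> \<circ> v \<circ> Inr) = (\<Sum>t\<in>Tset S. \<phi> t * (\<Prod>s\<in>S. if \<xi> (v (Inr s)) = t s then 1 else 0))"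
      using assms unfolding good_def by (subst ind_exp[OF lf]) auto
    have pp: "(\<Prod>i\<in>S <+> S. if \<xi> (v i) = u t t' i then 1 else 0 :: real)
        = (\<Prod>s\<in>S. if \<xi> (v (Inl s)) = t s then 1 else 0) * (\<Prod>s\<in>S. if \<xi> (v (Inr s)) = t' s then 1 else 0)" for t t'
      using fS unfolding u_def by (simp add: prod.Plus o_def)
    show "\<phi> (\<xi> \<circ> v \<circ> Inl) * \<phi> (\<xi> \<circ> v \<circ> Inr) = (\<Sum>t\<in>Tset S. \<Sum>t'\<in>Tset S. \<phi> t * \<phi> t' *
          (\<Prod>i\<in>S <+> S. if \<xi> (v i) = u t t' i then 1 else 0))"
      unfolding e1 e2 pp by (simp add: sum_product algebra_simps)
  qed
  also have "\<dots> = (\<Sum>t\<in>Tset S. \<Sum>t'\<in>Tset S. \<phi> t * \<phi> t' *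
          (\<Sum>v\<in>PiE (S <+> S) (\<lambda>_. B). \<Prod>i\<in>S <+> S. if \<xi> (v i) = u t t' i then 1 else 0))"
  proof -
    have sw: "(\<Sum>v\<in>V. \<Sum>t\<in>T. \<Sum>t'\<in>T. g v t t') = (\<Sum>t\<in>T. \<Sum>t'\<in>T. \<Sum>v\<in>V. g v t t')"
      for g :: "(int + int \<Rightarrow> int) \<Rightarrow> (int \<Rightarrow> nat) \<Rightarrow> (int \<Rightarrow> nat) \<Rightarrow> real" and V T
    proof -
      have "(\<Sum>v\<in>V. \<Sum>t\<in>T. \<Sum>t'\<in>T. g v t t') = (\<Sum>t\<in>T. \<Sum>v\<in>V. \<Sum>t'\<in>T. g v t t')" by (rule sum.swap)
      also have "\<dots> = (\<Sum>t\<in>T. \<Sum>t'\<in>T. \<Sum>v\<in>V. g v t t')" by (rule sum.cong[OF refl], rule sum.swap)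
      finally show ?thesis .
    qed
    show ?thesis unfolding sw by (simp add: sum_distrib_left)
  qed
  also have "\<dots> = (\<Sum>t\<in>Tset S. \<Sum>t'\<in>Tset S. \<phi> t * \<phi> t' * (c t * c t'))"
  proof (intro sum.cong refl arg_cong[where f="\<lambda>x. _ * x"])
    fix t t'
    have "(\<Sum>v\<in>PiE (S <+> S) (\<lambda>_. B). \<Prod>i\<in>S <+> S. if \<xi> (v i) = u t t' i then 1 else 0)
        = (\<Prod>i\<in>S <+> S. real (card {b\<in>B. \<xi> b = u t t' i}))"
      using fS unfolding B_def by (intro prod_ind_sum) auto
    also have "\<dots> = c t * c t'" unfolding c_def u_def using fS by (simp add: prod.Plus o_def)
    finally show "(\<Sum>v\<in>PiE (S <+> S) (\<lambda>_. B). \<Prod>i\<in>S <+> S. if \<xi> (v i) = u t t' i then 1 else 0) = c t * c t'" .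
  qed
  also have "\<dots> = (\<Sum>t\<in>Tset S. \<phi> t * c t) * (\<Sum>t'\<in>Tset S. \<phi> t' * c t')"
    by (simp add: sum_product algebra_simps)
  also have "\<dots> = ((2*real k+1)^card S * Gx S \<phi> k \<xi>)\<^sup>2"
    using GF_ind[OF assms] unfolding c_def B_def by (simp add: power2_eq_square)
  also have "\<dots> = (2*real k+1)^card (S <+> S) * (Gx S \<phi> k \<xi>)\<^sup>2"
    using fS by (simp add: card_Plus power_mult_distrib power_add power2_eq_square)
  finally show ?thesis unfolding B_def .
qed

end

definition avgP :: "nat \<Rightarrow> ((int \<Rightarrow> int) \<Rightarrow> real) \<Rightarrow> real" where
  "avgP k g = (\<Sum>\<pi>\<in>{\<pi>. \<pi> permutes {-int k..int k}}. g \<pi>) / fact (2 * k + 1)"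

lemma fin_perms_box: "finite {\<pi>. \<pi> permutes {-int k..int k}}"
  by (rule finite_permutations) simp

lemma avgP_add: "avgP k (\<lambda>\<pi>. f \<pi> + g \<pi>) = avgP k f + avgP k g"
  unfolding avgP_def by (simp add: sum.distrib add_divide_distrib)

lemma avgP_diff: "avgP k (\<lambda>\<pi>. f \<pi> - g \<pi>) = avgP k f - avgP k g"
  unfolding avgP_def by (simp add: sum_subtractf diff_divide_distrib)

lemma avgP_cmult: "avgP k (\<lambda>\<pi>. c * f \<pi>) = c * avgP k f"
  unfolding avgP_def by (simp add: sum_distrib_left)

lemma avgP_const: "avgP k (\<lambda>_. c) = c"
proof -
  have "card {\<pi>. \<pi> permutes {-int k..int k}} = fact (2 * k + 1)"
    by (rule card_permutations) auto
  then show ?thesis unfolding avgP_def sum_constant by (simp del: fact_Suc)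
qed

lemma avgP_mono: "(\<And>\<pi>. f \<pi> \<le> g \<pi>) \<Longrightarrow> avgP k f \<le> avgP k g"
  unfolding avgP_def by (intro divide_right_mono sum_mono) auto

lemma avgP_abs: "\<bar>avgP k f\<bar> \<le> avgP k (\<lambda>\<pi>. \<bar>f \<pi>\<bar>)"
  unfolding avgP_def by (simp add: sum_abs divide_right_mono)

lemma avgP_bnd: "(\<And>\<pi>. \<bar>f \<pi>\<bar> \<le> c) \<Longrightarrow> \<bar>avgP k f\<bar> \<le> c"
  using avgP_abs[of k f] avgP_mono[of "\<lambda>\<pi>. \<bar>f \<pi>\<bar>" "\<lambda>_. c" k] avgP_const[of k c] by simp

lemma avgP_sum: "avgP k (\<lambda>\<pi>. \<Sum>z\<in>A. f z \<pi>) = (\<Sum>z\<in>A. avgP k (f z))"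
  unfolding avgP_def by (simp add: sum.swap[of _ A] sum_divide_distrib)

lemma sq_div_aux:
  fixes A B F :: real assumes "F > 0" "A\<^sup>2 \<le> B * F"
  shows "(A / F)\<^sup>2 \<le> B / F"
proof -
  have "(A / F)\<^sup>2 = A\<^sup>2 / F\<^sup>2" by (simp add: power_divide)
  also have "\<dots> \<le> (B * F) / F\<^sup>2" using assms by (intro divide_right_mono) auto
  also have "\<dots> = B / F" using assms(1) by (simp add: power2_eq_square)
  finally show ?thesis .
qed

lemma avgP_CS: "avgP k (\<lambda>\<pi>. \<bar>f \<pi>\<bar>) \<le> sqrt (avgP k (\<lambda>\<pi>. (f \<pi>)\<^sup>2))"
proof -
  define P where "P = {\<pi>. \<pi> permutes {-int k..int k}}"
  have cP: "card P = fact (2 * k + 1)" unfolding P_def by (rule card_permutations) auto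
  have fp: "(fact (2 * k + 1) :: real) > 0" by simp
  have "(\<Sum>\<pi>\<in>P. \<bar>f \<pi>\<bar>)\<^sup>2 \<le> (\<Sum>\<pi>\<in>P. \<bar>f \<pi>\<bar>\<^sup>2) * card P"
    by (rule sum_squared_le_sum_of_squares)
  then have "((\<Sum>\<pi>\<in>P. \<bar>f \<pi>\<bar>) / fact (2 * k + 1))\<^sup>2 \<le> (\<Sum>\<pi>\<in>P. (f \<pi>)\<^sup>2) / fact (2 * k + 1)"
    using fp unfolding cP by (intro sq_div_aux) (simp_all del: fact_Suc)
  then have "(avgP k (\<lambda>\<pi>. \<bar>f \<pi>\<bar>))\<^sup>2 \<le> avgP k (\<lambda>\<pi>. (f \<pi>)\<^sup>2)" unfolding avgP_def P_def .
  then show ?thesis by (simp add: real_le_rsqrt)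
qed

definition Bp :: "int set \<Rightarrow> nat \<Rightarrow> int set" where
  "Bp S k = {z\<in>{-int k..int k}. \<forall>s\<in>S. z + s \<in> {-int k..int k}}"

definition Fp :: "int set \<Rightarrow> ((int \<Rightarrow> nat) \<Rightarrow> real) \<Rightarrow> nat \<Rightarrow> (int \<Rightarrow> nat) \<Rightarrow> real" where
  "Fp S \<phi> k \<xi> = (1 / (2 * real k + 1)) * (\<Sum>z\<in>Bp S k. \<phi> (shift z \<xi>))"

definition Rb :: "int set \<Rightarrow> nat" where
  "Rb S = (\<Sum>s\<in>S. nat \<bar>s\<bar>)"

lemma edge_card: "card {z\<in>{-int k..int k}. z + s \<notin> {-int k..int k}} \<le> nat \<bar>s\<bar>"
proof (cases "s \<ge> 0")
  case True
  have "{z\<in>{-int k..int k}. z + s \<notin> {-int k..int k}} \<subseteq> {int k - s + 1..int k}" using True by auto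
  then have "card {z\<in>{-int k..int k}. z + s \<notin> {-int k..int k}} \<le> card {int k - s + 1..int k}"
    by (intro card_mono) auto
  also have "\<dots> = nat \<bar>s\<bar>" using True by simp
  finally show ?thesis .
next
  case False
  have "{z\<in>{-int k..int k}. z + s \<notin> {-int k..int k}} \<subseteq> {-int k..-int k - s - 1}" using False by auto
  then have "card {z\<in>{-int k..int k}. z + s \<notin> {-int k..int k}} \<le> card {-int k..-int k - s - 1}"
    by (intro card_mono) auto
  also have "\<dots> = nat \<bar>s\<bar>" using False by simp
  finally show ?thesis .
qed

lemma boundary_card:
  assumes "finite S"
  shows "card ({-int k..int k} - Bp S k) \<le> Rb S"
proof -
  have "{-int k..int k} - Bp S k \<subseteq> (\<Union>s\<in>S. {z\<in>{-int k..int k}. z + s \<notin> {-int k..int k}})"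
    unfolding Bp_def by auto
  then have "card ({-int k..int k} - Bp S k) \<le> card (\<Union>s\<in>S. {z\<in>{-int k..int k}. z + s \<notin> {-int k..int k}})"
    using assms by (intro card_mono) (auto intro: finite_subset[of _ "{-int k..int k}"])
  also have "\<dots> \<le> (\<Sum>s\<in>S. card {z\<in>{-int k..int k}. z + s \<notin> {-int k..int k}})"
    using assms by (rule card_UN_le)
  also have "\<dots> \<le> Rb S" unfolding Rb_def by (intro sum_mono edge_card)
  finally show ?thesis .
qed

lemma Bp_sub: "Bp S k \<subseteq> {-int k..int k}" unfolding Bp_def by auto

lemma card_Bp: "finite S \<Longrightarrow> real (card (Bp S k)) \<ge> 2 * real k + 1 - real (Rb S)"
proof -
  assume fS: "finite S"
  have "card {-int k..int k} = card (Bp S k) + card ({-int k..int k} - Bp S k)"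
    using Bp_sub[of S k] by (metis card_Diff_subset finite_atLeastAtMost_int finite_subset add_diff_inverse_nat
        card_mono not_less)
  then show ?thesis using boundary_card[OF fS, of k] by simp
qed

lemma card_Bp_le: "real (card (Bp S k)) \<le> 2 * real k + 1"
proof -
  have "card (Bp S k) \<le> card {-int k..int k}" using Bp_sub by (intro card_mono) auto
  then show ?thesis by simp
qed

lemma overlap_card:
  fixes S A :: "int set"
  assumes "finite S"
  shows "card {z'\<in>A. \<exists>s\<in>S. \<exists>s'\<in>S. z + s = z' + s'} \<le> card S ^ 2"
proof -
  have "{z'\<in>A. \<exists>s\<in>S. \<exists>s'\<in>S. z + s = z' + s'} \<subseteq> (\<lambda>(a, b). z + a - b) ` (S \<times> S)"
    by (auto simp: image_iff) (metis add_diff_cancel_right' add.commute)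
  then have "card {z'\<in>A. \<exists>s\<in>S. \<exists>s'\<in>S. z + s = z' + s'} \<le> card ((\<lambda>(a, b). z + a - b) ` (S \<times> S))"
    using assms by (intro card_mono) auto
  also have "\<dots> \<le> card (S \<times> S)" by (rule card_image_le) (use assms in auto)
  also have "\<dots> = card S ^ 2" by (simp add: card_cartesian_product power2_eq_square)
  finally show ?thesis .
qed

context
  fixes S :: "int set" and \<phi> :: "(int \<Rightarrow> nat) \<Rightarrow> real"
  assumes lf: "local_fun S \<phi>"
begin

lemma M1:
  assumes g: "good \<xi>" and win: "\<And>s. s \<in> S \<Longrightarrow> z + s \<in> {-int k..int k}"
  shows "\<bar>avgP k (\<lambda>\<pi>. \<phi> (shift z (\<xi> \<circ> \<pi>))) - Gx S \<phi> k \<xi>\<bar> \<le> 2 * Mphi S \<phi> * card S ^ 2 / (2 * real k + 1)"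
proof -
  have fS: "finite S" by (rule finS[OF lf])
  define h where "h v = \<phi> (\<xi> \<circ> v)" for v :: "int \<Rightarrow> int"
  have eqs: "\<phi> (shift z (\<xi> \<circ> \<pi>)) = h (\<pi> \<circ> (\<lambda>s. z + s))" for \<pi>
    unfolding h_def shift_def by (simp add: o_def add.commute)
  have "\<bar>(\<Sum>\<pi>\<in>{\<pi>. \<pi> permutes {-int k..int k}}. h (\<pi> \<circ> (\<lambda>s. z + s))) / fact (card {-int k..int k})
        - (\<Sum>v\<in>PiE S (\<lambda>_. {-int k..int k}). h v) / card {-int k..int k} ^ card S\<bar>
      \<le> 2 * Mphi S \<phi> * card S ^ 2 / card {-int k..int k}"
  proof (rule perm_vs_all)
    show "finite {-int k..int k}" "card {-int k..int k} > 0" by auto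
    show "finite S" by (rule fS)
    show "inj_on (\<lambda>s. z + s) S" by (simp add: inj_on_def)
    show "(\<lambda>s. z + s) ` S \<subseteq> {-int k..int k}" using win by auto
    show "h v = h v'" if "\<forall>i\<in>S. v i = v' i" for v v'
      unfolding h_def using that by (intro loc[OF lf]) simp
    show "\<bar>h v\<bar> \<le> Mphi S \<phi>" if "v \<in> PiE S (\<lambda>_. {-int k..int k})" for v
      unfolding h_def using g unfolding good_def by (intro phi_bnd[OF lf]) simp
  qed
  moreover have "(\<Sum>v\<in>PiE S (\<lambda>_. {-int k..int k}). h v) / card {-int k..int k} ^ card S = Gx S \<phi> k \<xi>"
  proof -
    have "card {-int k..int k} = 2 * k + 1" by simp
    then have c: "real (card {-int k..int k}) = 2 * real k + 1" by simp
    show ?thesis unfolding h_def GF[OF lf g] c by simp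
  qed
  moreover have "real (card {-int k..int k}) = 2 * real k + 1" by simp
  moreover have "card {-int k..int k} = 2 * k + 1" by simp
  ultimately show ?thesis unfolding avgP_def eqs by simp
qed

lemma M2:
  assumes g: "good \<xi>" and win: "\<And>s. s \<in> S \<Longrightarrow> z + s \<in> {-int k..int k}" "\<And>s. s \<in> S \<Longrightarrow> z' + s \<in> {-int k..int k}"
    and disj: "\<And>s s'. s \<in> S \<Longrightarrow> s' \<in> S \<Longrightarrow> z + s \<noteq> z' + s'"
  shows "\<bar>avgP k (\<lambda>\<pi>. \<phi> (shift z (\<xi> \<circ> \<pi>)) * \<phi> (shift z' (\<xi> \<circ> \<pi>))) - (Gx S \<phi> k \<xi>)\<^sup>2\<bar>
         \<le> 2 * (Mphi S \<phi>)\<^sup>2 * (2 * card S) ^ 2 / (2 * real k + 1)"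
proof -
  have fS: "finite S" by (rule finS[OF lf])
  define h where "h v = \<phi> (\<xi> \<circ> v \<circ> Inl) * \<phi> (\<xi> \<circ> v \<circ> Inr)" for v :: "int + int \<Rightarrow> int"
  define \<iota> where "\<iota> = case_sum (\<lambda>s. z + s) (\<lambda>s. z' + s)"
  have eqs: "\<phi> (shift z (\<xi> \<circ> \<pi>)) * \<phi> (shift z' (\<xi> \<circ> \<pi>)) = h (\<pi> \<circ> \<iota>)" for \<pi>
  proof -
    have "shift z (\<xi> \<circ> \<pi>) = \<xi> \<circ> (\<pi> \<circ> \<iota>) \<circ> Inl" "shift z' (\<xi> \<circ> \<pi>) = \<xi> \<circ> (\<pi> \<circ> \<iota>) \<circ> Inr"
      unfolding shift_def \<iota>_def by (auto simp: fun_eq_iff add.commute)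
    then show ?thesis unfolding h_def by simp
  qed
  have "\<bar>(\<Sum>\<pi>\<in>{\<pi>. \<pi> permutes {-int k..int k}}. h (\<pi> \<circ> \<iota>)) / fact (card {-int k..int k})
        - (\<Sum>v\<in>PiE (S <+> S) (\<lambda>_. {-int k..int k}). h v) / card {-int k..int k} ^ card (S <+> S)\<bar>
      \<le> 2 * (Mphi S \<phi>)\<^sup>2 * card (S <+> S) ^ 2 / card {-int k..int k}"
  proof (rule perm_vs_all)
    show "finite {-int k..int k}" "card {-int k..int k} > 0" by auto
    show "finite (S <+> S)" using fS by simp
    show "inj_on \<iota> (S <+> S)" unfolding \<iota>_def inj_on_def using disj by (auto; metis)
    show "\<iota> ` (S <+> S) \<subseteq> {-int k..int k}" using win unfolding \<iota>_def by auto
    show "h v = h v'" if "\<forall>i\<in>S <+> S. v i = v' i" for v v'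
    proof -
      have "\<phi> (\<xi> \<circ> v \<circ> Inl) = \<phi> (\<xi> \<circ> v' \<circ> Inl)" using that by (intro loc[OF lf]) (simp add: Plus_def)
      moreover have "\<phi> (\<xi> \<circ> v \<circ> Inr) = \<phi> (\<xi> \<circ> v' \<circ> Inr)" using that by (intro loc[OF lf]) (simp add: Plus_def)
      ultimately show ?thesis unfolding h_def by simp
    qed
    show "\<bar>h v\<bar> \<le> (Mphi S \<phi>)\<^sup>2" if "v \<in> PiE (S <+> S) (\<lambda>_. {-int k..int k})" for v
    proof -
      have a: "\<bar>\<phi> (\<xi> \<circ> v \<circ> Inl)\<bar> \<le> Mphi S \<phi>" using g unfolding good_def by (intro phi_bnd[OF lf]) simp
      have b: "\<bar>\<phi> (\<xi> \<circ> v \<circ> Inr)\<bar> \<le> Mphi S \<phi>" using g unfolding good_def by (intro phi_bnd[OF lf]) simp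
      show ?thesis unfolding h_def abs_mult power2_eq_square by (rule mult_mono[OF a b]) (auto simp: Mphi_nonneg[OF lf])
    qed
  qed
  moreover have "(\<Sum>v\<in>PiE (S <+> S) (\<lambda>_. {-int k..int k}). h v) / card {-int k..int k} ^ card (S <+> S) = (Gx S \<phi> k \<xi>)\<^sup>2"
  proof -
    have "card {-int k..int k} = 2 * k + 1" by simp
    then have c: "real (card {-int k..int k}) = 2 * real k + 1" by simp
    show ?thesis unfolding h_def GF2[OF lf g] c by simp
  qed
  moreover have "real (card {-int k..int k}) = 2 * real k + 1" by simp
  moreover have "card {-int k..int k} = 2 * k + 1" by simp
  moreover have "card (S <+> S) = 2 * card S" using fS by (simp add: card_Plus)
  ultimately show ?thesis unfolding avgP_def eqs by simp
qed

lemma Y_bnd: "good \<xi> \<Longrightarrow> \<bar>\<phi> (shift z (\<xi> \<circ> \<pi>))\<bar> \<le> Mphi S \<phi>"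
  unfolding good_def shift_def by (intro phi_bnd[OF lf]) simp

lemma G_bnd:
  assumes g: "good \<xi>"
  shows "\<bar>Gx S \<phi> k \<xi>\<bar> \<le> Mphi S \<phi>"
proof -
  have fS: "finite S" by (rule finS[OF lf])
  define V where "V = PiE S (\<lambda>_. {-int k..int k})"
  have cV: "real (card V) = (2*real k+1)^card S" unfolding V_def using fS by (simp add: card_PiE_const)
  have m: "(2*real k+1)^card S > 0" by simp
  have "\<bar>\<Sum>v\<in>V. \<phi> (\<xi> \<circ> v)\<bar> \<le> (\<Sum>v\<in>V. Mphi S \<phi>)"
    using g unfolding good_def by (intro order.trans[OF sum_abs] sum_mono phi_bnd[OF lf]) simp
  also have "\<dots> = (2*real k+1)^card S * Mphi S \<phi>" using cV by simp
  finally have "\<bar>(2*real k+1)^card S * Gx S \<phi> k \<xi>\<bar> \<le> (2*real k+1)^card S * Mphi S \<phi>"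
    unfolding V_def GF[OF lf g] .
  then show ?thesis using m by (simp add: abs_mult)
qed

lemma pair_bnd:
  assumes g: "good \<xi>" and z: "z \<in> Bp S k" and z': "z' \<in> Bp S k"
  shows "\<bar>avgP k (\<lambda>\<pi>. (\<phi> (shift z (\<xi> \<circ> \<pi>)) - Gx S \<phi> k \<xi>) * (\<phi> (shift z' (\<xi> \<circ> \<pi>)) - Gx S \<phi> k \<xi>))\<bar>
     \<le> 12 * (Mphi S \<phi>)\<^sup>2 * card S ^ 2 / (2 * real k + 1)
        + (if \<exists>s\<in>S. \<exists>s'\<in>S. z + s = z' + s' then 4 * (Mphi S \<phi>)\<^sup>2 else 0)"
proof -
  define M where "M = Mphi S \<phi>"
  define G where "G = Gx S \<phi> k \<xi>"
  define Y where "Y z \<pi> = \<phi> (shift z (\<xi> \<circ> \<pi>))" for z \<pi>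
  define m where "m = 2 * real k + 1"
  have m: "m > 0" unfolding m_def by simp
  have M0: "M \<ge> 0" unfolding M_def by (rule Mphi_nonneg[OF lf])
  have Yb: "\<bar>Y z \<pi>\<bar> \<le> M" for z \<pi> unfolding Y_def M_def by (rule Y_bnd[OF g])
  have Gb: "\<bar>G\<bar> \<le> M" unfolding G_def M_def by (rule G_bnd[OF g])
  have nn: "12 * M\<^sup>2 * card S ^ 2 / m \<ge> 0" using m by simp
  show ?thesis
  proof (cases "\<exists>s\<in>S. \<exists>s'\<in>S. z + s = z' + s'")
    case True
    have "\<bar>avgP k (\<lambda>\<pi>. (Y z \<pi> - G) * (Y z' \<pi> - G))\<bar> \<le> 4 * M\<^sup>2"
    proof (rule avgP_bnd)
      fix \<pi>
      have a: "\<bar>Y z \<pi> - G\<bar> \<le> 2 * M" using Yb[of z \<pi>] Gb by linarith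
      have b: "\<bar>Y z' \<pi> - G\<bar> \<le> 2 * M" using Yb[of z' \<pi>] Gb by linarith
      have "\<bar>(Y z \<pi> - G) * (Y z' \<pi> - G)\<bar> \<le> (2 * M) * (2 * M)"
        unfolding abs_mult by (rule mult_mono[OF a b]) (use M0 in auto)
      then show "\<bar>(Y z \<pi> - G) * (Y z' \<pi> - G)\<bar> \<le> 4 * M\<^sup>2" by (simp add: power2_eq_square)
    qed
    then have X: "\<bar>avgP k (\<lambda>\<pi>. (\<phi> (shift z (\<xi> \<circ> \<pi>)) - Gx S \<phi> k \<xi>) * (\<phi> (shift z' (\<xi> \<circ> \<pi>)) - Gx S \<phi> k \<xi>))\<bar> \<le> 4 * (Mphi S \<phi>)\<^sup>2"
      unfolding Y_def G_def M_def .
    have nn': "12 * (Mphi S \<phi>)\<^sup>2 * card S ^ 2 / (2 * real k + 1) \<ge> 0" by simp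
    show ?thesis by (rule order.trans[OF X]) (use True nn' in \<open>simp add: of_nat_power\<close>)
  next
    case False
    have wz: "\<And>s. s \<in> S \<Longrightarrow> z + s \<in> {-int k..int k}" using z unfolding Bp_def by auto
    have wz': "\<And>s. s \<in> S \<Longrightarrow> z' + s \<in> {-int k..int k}" using z' unfolding Bp_def by auto
    have d1: "\<bar>avgP k (Y z) - G\<bar> \<le> 2 * M * card S ^ 2 / m"
      using M1[OF g wz] unfolding Y_def G_def M_def m_def .
    have d1': "\<bar>avgP k (Y z') - G\<bar> \<le> 2 * M * card S ^ 2 / m"
      using M1[OF g wz'] unfolding Y_def G_def M_def m_def .
    have d2: "\<bar>avgP k (\<lambda>\<pi>. Y z \<pi> * Y z' \<pi>) - G\<^sup>2\<bar> \<le> 2 * M\<^sup>2 * (2 * card S) ^ 2 / m"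
      using M2[OF g wz wz'] False unfolding Y_def G_def M_def m_def by blast
    have eq: "(\<lambda>\<pi>. (Y z \<pi> - G) * (Y z' \<pi> - G)) = (\<lambda>\<pi>. ((Y z \<pi> * Y z' \<pi> - G * Y z' \<pi>) - G * Y z \<pi>) + G\<^sup>2)"
      by (auto simp: fun_eq_iff algebra_simps power2_eq_square)
    have "avgP k (\<lambda>\<pi>. (Y z \<pi> - G) * (Y z' \<pi> - G))
        = (avgP k (\<lambda>\<pi>. Y z \<pi> * Y z' \<pi>) - G\<^sup>2) - G * (avgP k (Y z') - G) - G * (avgP k (Y z) - G)"
      unfolding eq avgP_add avgP_diff avgP_cmult avgP_const by (simp add: algebra_simps power2_eq_square)
    also have "\<bar>\<dots>\<bar> \<le> \<bar>avgP k (\<lambda>\<pi>. Y z \<pi> * Y z' \<pi>) - G\<^sup>2\<bar> + \<bar>G\<bar> * \<bar>avgP k (Y z') - G\<bar> + \<bar>G\<bar> * \<bar>avgP k (Y z) - G\<bar>"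
      by (simp add: abs_mult[symmetric])
    also have "\<dots> \<le> 2 * M\<^sup>2 * (2 * card S) ^ 2 / m + M * (2 * M * card S ^ 2 / m) + M * (2 * M * card S ^ 2 / m)"
      using d1 d1' d2 Gb M0 by (intro add_mono mult_mono) auto
    also have "\<dots> = 12 * M\<^sup>2 * card S ^ 2 / m" by (simp add: algebra_simps power2_eq_square add_divide_distrib[symmetric])
    finally show ?thesis using False unfolding Y_def G_def M_def m_def by simp
  qed
qed

lemma sum_if_const: "finite A \<Longrightarrow> (\<Sum>x\<in>A. if P x then c else 0) = c * real (card {x\<in>A. P x})"
  by (simp add: sum.If_cases Int_def)

lemma VB:
  assumes g: "good \<xi>"
  shows "avgP k (\<lambda>\<pi>. (Fp S \<phi> k (\<xi> \<circ> \<pi>) - Gx S \<phi> k \<xi>)\<^sup>2)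
         \<le> (32 * real (card S) ^ 2 + 2 * real (Rb S) ^ 2) * (Mphi S \<phi>)\<^sup>2 / (2 * real k + 1)"
proof -
  have fS: "finite S" by (rule finS[OF lf])
  define M where "M = Mphi S \<phi>"
  define G where "G = Gx S \<phi> k \<xi>"
  define m where "m = 2 * real k + 1"
  define b where "b = real (card (Bp S k))"
  define sS where "sS = real (card S)"
  define R where "R = real (Rb S)"
  define e where "e z \<pi> = \<phi> (shift z (\<xi> \<circ> \<pi>)) - G" for z \<pi>
  define X where "X \<pi> = (1 / m) * (\<Sum>z\<in>Bp S k. e z \<pi>)" for \<pi>
  define c0 where "c0 = (1 - b / m) * G"
  have m: "m > 0" "m \<ge> 1" unfolding m_def by simp_all
  have M0: "M \<ge> 0" unfolding M_def by (rule Mphi_nonneg[OF lf])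
  have Gb: "\<bar>G\<bar> \<le> M" unfolding G_def M_def by (rule G_bnd[OF g])
  have fB: "finite (Bp S k)" using Bp_sub finite_subset by blast
  have bm: "b \<le> m" unfolding b_def m_def by (rule card_Bp_le)
  have bR: "m - b \<le> R" unfolding b_def m_def R_def using card_Bp[OF fS, of k] by simp
  have Feq: "Fp S \<phi> k (\<xi> \<circ> \<pi>) - G = X \<pi> - c0" for \<pi>
  proof -
    have "(\<Sum>z\<in>Bp S k. e z \<pi>) = (\<Sum>z\<in>Bp S k. \<phi> (shift z (\<xi> \<circ> \<pi>))) - b * G"
      unfolding e_def b_def by (simp add: sum_subtractf)
    then show ?thesis unfolding Fp_def X_def c0_def m_def[symmetric] using m
      by (simp add: field_simps)
  qed
  have sq: "(X \<pi> - c0)\<^sup>2 \<le> 2 * (X \<pi>)\<^sup>2 + 2 * c0\<^sup>2" for \<pi>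
  proof -
    have "(X \<pi> - c0)\<^sup>2 + (X \<pi> + c0)\<^sup>2 = 2 * (X \<pi>)\<^sup>2 + 2 * c0\<^sup>2" by (simp add: power2_eq_square algebra_simps)
    moreover have "(X \<pi> + c0)\<^sup>2 \<ge> 0" by simp
    ultimately show ?thesis by linarith
  qed
  have Xsq: "(X \<pi>)\<^sup>2 = (1 / m\<^sup>2) * (\<Sum>z\<in>Bp S k. \<Sum>z'\<in>Bp S k. e z \<pi> * e z' \<pi>)" for \<pi>
    unfolding X_def by (simp add: power2_eq_square sum_product)
  have aX: "avgP k (\<lambda>\<pi>. (X \<pi>)\<^sup>2) = (1 / m\<^sup>2) * (\<Sum>z\<in>Bp S k. \<Sum>z'\<in>Bp S k. avgP k (\<lambda>\<pi>. e z \<pi> * e z' \<pi>))"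
    unfolding Xsq avgP_cmult avgP_sum ..
  define A where "A = 12 * M\<^sup>2 * sS ^ 2 / m"
  have pb: "avgP k (\<lambda>\<pi>. e z \<pi> * e z' \<pi>) \<le> A + (if \<exists>s\<in>S. \<exists>s'\<in>S. z + s = z' + s' then 4 * M\<^sup>2 else 0)"
    if "z \<in> Bp S k" "z' \<in> Bp S k" for z z'
    using pair_bnd[OF g that] unfolding e_def A_def M_def G_def sS_def m_def by simp
  have "(\<Sum>z\<in>Bp S k. \<Sum>z'\<in>Bp S k. avgP k (\<lambda>\<pi>. e z \<pi> * e z' \<pi>))
      \<le> (\<Sum>z\<in>Bp S k. \<Sum>z'\<in>Bp S k. A + (if \<exists>s\<in>S. \<exists>s'\<in>S. z + s = z' + s' then 4 * M\<^sup>2 else 0))"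
    using pb by (intro sum_mono) auto
  also have "\<dots> = (\<Sum>z\<in>Bp S k. b * A + 4 * M\<^sup>2 * real (card {z'\<in>Bp S k. \<exists>s\<in>S. \<exists>s'\<in>S. z + s = z' + s'}))"
    unfolding b_def using fB by (simp add: sum.distrib sum_if_const)
  also have "\<dots> \<le> (\<Sum>z\<in>Bp S k. m * A + 4 * M\<^sup>2 * sS ^ 2)"
  proof -
    have ov: "real (card {z'\<in>Bp S k. \<exists>s\<in>S. \<exists>s'\<in>S. z + s = z' + s'}) \<le> sS ^ 2" for z
    proof -
      have "card {z'\<in>Bp S k. \<exists>s\<in>S. \<exists>s'\<in>S. z + s = z' + s'} \<le> card S ^ 2" by (rule overlap_card[OF fS])
      then have "real (card {z'\<in>Bp S k. \<exists>s\<in>S. \<exists>s'\<in>S. z + s = z' + s'}) \<le> real (card S ^ 2)"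
        by (simp only: of_nat_le_iff)
      then show ?thesis unfolding sS_def by simp
    qed
    have A0: "A \<ge> 0" unfolding A_def using m by simp
    show ?thesis using bm ov A0 by (intro sum_mono add_mono mult_right_mono mult_left_mono) auto
  qed
  also have "\<dots> = b * (m * A + 4 * M\<^sup>2 * sS ^ 2)" unfolding b_def by simp
  also have "\<dots> \<le> m * (m * A + 4 * M\<^sup>2 * sS ^ 2)"
    using bm by (intro mult_right_mono) (auto simp: A_def m)
  also have "\<dots> = m * (16 * M\<^sup>2 * sS ^ 2)" unfolding A_def using m by (simp add: field_simps)
  finally have S2: "(\<Sum>z\<in>Bp S k. \<Sum>z'\<in>Bp S k. avgP k (\<lambda>\<pi>. e z \<pi> * e z' \<pi>)) \<le> m * (16 * M\<^sup>2 * sS ^ 2)" .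
  have aXb: "avgP k (\<lambda>\<pi>. (X \<pi>)\<^sup>2) \<le> 16 * M\<^sup>2 * sS ^ 2 / m"
  proof -
    have "avgP k (\<lambda>\<pi>. (X \<pi>)\<^sup>2) \<le> (1 / m\<^sup>2) * (m * (16 * M\<^sup>2 * sS ^ 2))"
      unfolding aX using S2 m by (intro mult_left_mono) auto
    also have "\<dots> = 16 * M\<^sup>2 * sS ^ 2 / m" using m by (simp add: power2_eq_square field_simps)
    finally show ?thesis .
  qed
  have c0b: "c0\<^sup>2 \<le> R\<^sup>2 * M\<^sup>2 / m"
  proof -
    have "\<bar>1 - b / m\<bar> \<le> R / m"
    proof -
      have "1 - b / m = (m - b) / m" using m by (simp add: field_simps)
      moreover have "0 \<le> m - b" using bm by simp
      ultimately show ?thesis using bR m by (simp add: divide_right_mono)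
    qed
    then have "\<bar>c0\<bar> \<le> R / m * M" unfolding c0_def abs_mult using Gb
      by (intro mult_mono) auto
    then have "c0\<^sup>2 \<le> (R / m * M)\<^sup>2" by (metis abs_ge_zero order.trans power2_abs power_mono)
    also have "\<dots> = R\<^sup>2 * M\<^sup>2 / m\<^sup>2" by (simp add: power_mult_distrib power_divide)
    also have "\<dots> \<le> R\<^sup>2 * M\<^sup>2 / m"
    proof -
      have "m \<le> m\<^sup>2" using m by (simp add: power2_eq_square)
      then show ?thesis using m by (intro divide_left_mono) auto
    qed
    finally show ?thesis .
  qed
  have "avgP k (\<lambda>\<pi>. (Fp S \<phi> k (\<xi> \<circ> \<pi>) - Gx S \<phi> k \<xi>)\<^sup>2) \<le> avgP k (\<lambda>\<pi>. 2 * (X \<pi>)\<^sup>2 + 2 * c0\<^sup>2)"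
    unfolding G_def[symmetric] Feq by (rule avgP_mono) (rule sq)
  also have "\<dots> = 2 * avgP k (\<lambda>\<pi>. (X \<pi>)\<^sup>2) + 2 * c0\<^sup>2"
    unfolding avgP_add avgP_cmult avgP_const ..
  also have "\<dots> \<le> 2 * (16 * M\<^sup>2 * sS ^ 2 / m) + 2 * (R\<^sup>2 * M\<^sup>2 / m)"
    using aXb c0b by simp
  also have "\<dots> = (32 * sS ^ 2 + 2 * R ^ 2) * M\<^sup>2 / m"
    using m by (simp add: field_simps)
  also have "\<dots> = (32 * real (card S) ^ 2 + 2 * real (Rb S) ^ 2) * (Mphi S \<phi>)\<^sup>2 / (2 * real k + 1)"
    unfolding sS_def R_def M_def m_def ..
  finally show ?thesis .
qed

end

definition emod :: "nat \<Rightarrow> int \<Rightarrow> int" where "emod N z = z mod int N"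

definition hat :: "nat \<Rightarrow> nat \<Rightarrow> (int \<Rightarrow> int) \<Rightarrow> (int \<Rightarrow> int)" where
  "hat N k \<pi> = (\<lambda>x. if x \<in> emod N ` {-int k..int k}
      then emod N (\<pi> (inv_into {-int k..int k} (emod N) x)) else x)"

lemma inj_emod:
  assumes "2 * k + 1 \<le> N"
  shows "inj_on (emod N) {-int k..int k}"
proof (rule inj_onI)
  fix z z' assume z: "z \<in> {-int k..int k}" and z': "z' \<in> {-int k..int k}" and e: "emod N z = emod N z'"
  show "z = z'"
  proof (rule ccontr)
    assume ne: "z \<noteq> z'"
    have "int N dvd z - z'" using e unfolding emod_def by (simp add: mod_eq_dvd_iff)
    then have "\<bar>int N\<bar> \<le> \<bar>z - z'\<bar>" using ne by (intro dvd_imp_le_int) auto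
    moreover have "\<bar>z - z'\<bar> \<le> 2 * int k" using z z' by auto
    ultimately show False using assms by simp
  qed
qed

lemma emod_range: "N > 0 \<Longrightarrow> emod N ` A \<subseteq> {0..<int N}"
  unfolding emod_def by auto

lemma hat_permutes:
  assumes "2 * k + 1 \<le> N" "\<pi> permutes {-int k..int k}"
  shows "hat N k \<pi> permutes (emod N ` {-int k..int k})"
proof -
  define B where "B = {-int k..int k}"
  have inj: "inj_on (emod N) B" unfolding B_def by (rule inj_emod[OF assms(1)])
  have e: "bij_betw (emod N) B (emod N ` B)" using inj by (simp add: bij_betw_def)
  have ei: "bij_betw (inv_into B (emod N)) (emod N ` B) B" by (rule bij_betw_inv_into[OF e])
  have p: "bij_betw \<pi> B B" using assms(2) unfolding B_def by (rule permutes_imp_bij)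
  have c: "bij_betw (emod N \<circ> \<pi> \<circ> inv_into B (emod N)) (emod N ` B) (emod N ` B)"
    using bij_betw_trans[OF bij_betw_trans[OF ei p] e] by (simp add: comp_assoc)
  have "bij_betw (hat N k \<pi>) (emod N ` B) (emod N ` B)"
    using c unfolding hat_def B_def[symmetric] by (rule bij_betw_cong[THEN iffD1, rotated]) auto
  moreover have "\<And>x. x \<notin> emod N ` B \<Longrightarrow> hat N k \<pi> x = x" unfolding hat_def B_def by auto
  ultimately show ?thesis unfolding B_def by (rule bij_imp_permutes)
qed

lemma hat_permutes_N:
  assumes "2 * k + 1 \<le> N" "\<pi> permutes {-int k..int k}"
  shows "hat N k \<pi> permutes {0..<int N}"
  using permutes_subset[OF hat_permutes[OF assms] emod_range] assms(1) by auto

lemma per_hat: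
  assumes "2 * k + 1 \<le> N" "z \<in> {-int k..int k}"
  shows "per N (\<eta> \<circ> hat N k \<pi>) z = per N \<eta> (\<pi> z)"
proof -
  have "z mod int N = emod N z" unfolding emod_def ..
  moreover have "inv_into {-int k..int k} (emod N) (emod N z) = z"
    using inv_into_f_f[OF inj_emod[OF assms(1)] assms(2)] .
  ultimately show ?thesis unfolding per_def hat_def using assms(2) by (simp add: emod_def)
qed

lemma dlt_hat:
  assumes N: "2 * k + 2 \<le> N" and p: "\<pi> permutes {-int k..int k}"
    and bond: "\<And>x. x \<in> {0..<int N} \<Longrightarrow> dlt N f (Transposition.transpose x ((x + 1) mod int N)) \<le> \<beta>"
    and b0: "\<beta> \<ge> 0"
  shows "dlt N f (hat N k \<pi>) \<le> (2 * real k + 1) * ((4 * real k) * \<beta>)"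
proof -
  have N1: "2 * k + 1 \<le> N" using N by simp
  have cP: "card (emod N ` {-int k..int k}) = 2 * k + 1"
    using card_image[OF inj_emod[OF N1]] by simp
  have "dlt N f (hat N k \<pi>) \<le> real (card (emod N ` {-int k..int k})) * ((4 * real k) * \<beta>)"
  proof (rule dlt_perm)
    show "finite (emod N ` {-int k..int k})" by simp
    show "emod N ` {-int k..int k} \<subseteq> {0..<int N}" using N by (intro emod_range) simp
    show "hat N k \<pi> permutes emod N ` {-int k..int k}" by (rule hat_permutes[OF N1 p])
    fix a b assume a: "a \<in> emod N ` {-int k..int k}" and b: "b \<in> emod N ` {-int k..int k}"
    then obtain z z' where z: "z \<in> {-int k..int k}" "a = z mod int N" and z': "z' \<in> {-int k..int k}" "b = z' mod int N"
      unfolding emod_def by auto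
    have gen: "dlt N f (Transposition.transpose (y mod int N) (y' mod int N)) \<le> (4 * real k) * \<beta>"
      if y: "y \<in> {-int k..int k}" "y' \<in> {-int k..int k}" "y < y'" for y y'
    proof -
      define d where "d = nat (y' - y)"
      have d1: "1 \<le> d" "d < N" "real d \<le> 2 * real k" using y N unfolding d_def by auto
      have "y' = y + int d" unfolding d_def using y by simp
      then have "dlt N f (Transposition.transpose (y mod int N) (y' mod int N)) \<le> (2 * real d - 1) * \<beta>"
        using dlt_path[OF bond d1(1,2)] by simp
      also have "\<dots> \<le> (4 * real k) * \<beta>" using d1 b0 by (intro mult_right_mono) auto
      finally show ?thesis .
    qed
    show "dlt N f (Transposition.transpose a b) \<le> (4 * real k) * \<beta>"
    proof (cases z z' rule: linorder_cases)
      case less then show ?thesis using gen z z' by simp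
    next
      case equal then show ?thesis using z z' b0 dlt_id[of N f] by simp
    next
      case greater then show ?thesis using gen[of z' z] z z' by (simp add: transpose_commute)
    qed
  qed
  then show ?thesis unfolding cP by (simp add: add.commute)
qed


lemma good_per: "N > 0 \<Longrightarrow> \<eta> \<in> Omega N \<Longrightarrow> good (per N \<eta>)"
  unfolding good_def per_def Omega_def by auto

lemma good_comp: "good \<xi> \<Longrightarrow> good (\<xi> \<circ> \<pi>)"
  unfolding good_def by simp

lemma dn_loc: "(\<And>x. x \<in> {-int k..int k} \<Longrightarrow> \<xi> x = \<xi>' x) \<Longrightarrow> dn k \<xi> a = dn k \<xi>' a"
  unfolding dn_def by (intro arg_cong[where f="\<lambda>x. _ * x"] sum.cong) auto

lemma Gx_loc: "(\<And>x. x \<in> {-int k..int k} \<Longrightarrow> \<xi> x = \<xi>' x) \<Longrightarrow> Gx S \<phi> k \<xi> = Gx S \<phi> k \<xi>'"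
  unfolding Gx_def using dn_loc by metis

lemma dn_perm: "\<pi> permutes {-int k..int k} \<Longrightarrow> dn k (\<xi> \<circ> \<pi>) a = dn k \<xi> a"
  unfolding dn_def using sum.permute[of \<pi> "{-int k..int k}" "\<lambda>z. if \<xi> z = a then 1 else (0::real)"]
  by (simp add: o_def)

lemma Gx_perm: "\<pi> permutes {-int k..int k} \<Longrightarrow> Gx S \<phi> k (\<xi> \<circ> \<pi>) = Gx S \<phi> k \<xi>"
  unfolding Gx_def by (simp add: dn_perm)

lemma avgP_cong: "(\<And>\<pi>. \<pi> permutes {-int k..int k} \<Longrightarrow> f \<pi> = g \<pi>) \<Longrightarrow> avgP k f = avgP k g"
  unfolding avgP_def by (intro arg_cong[where f="\<lambda>x. x / _"] sum.cong) auto

lemma Gx_box: "phi_tilde S \<phi> (box_density N k 1 \<eta>) (box_density N k 2 \<eta>) = Gx S \<phi> k (per N \<eta>)"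
  unfolding Gx_def box_density_def dn_def ..

lemma avgP_mono': "(\<And>\<pi>. \<pi> permutes {-int k..int k} \<Longrightarrow> f \<pi> \<le> g \<pi>) \<Longrightarrow> avgP k f \<le> avgP k g"
  unfolding avgP_def by (intro divide_right_mono sum_mono) auto

lemma Dirichlet_nonneg: "is_density N f \<Longrightarrow> N > 0 \<Longrightarrow> Dirichlet N f \<ge> 0"
proof -
  assume d: "is_density N f" and N: "N > 0"
  have "0 \<le> (\<Sum>\<eta>\<in>Omega N. (1/3)^N * (sqrt (f (\<eta> \<circ> Transposition.transpose 0 ((0 + 1) mod int N))) - sqrt (f \<eta>))\<^sup>2)"
    by (intro sum_nonneg) auto
  also have "\<dots> \<le> 2 * Dirichlet N f" using N by (intro Dirichlet_single[OF d]) auto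
  finally show ?thesis by simp
qed

context
  fixes S :: "int set" and \<phi> :: "(int \<Rightarrow> nat) \<Rightarrow> real"
  assumes lf: "local_fun S \<phi>"
begin

lemma Fp_loc:
  assumes "\<And>x. x \<in> {-int k..int k} \<Longrightarrow> \<xi> x = \<xi>' x"
  shows "Fp S \<phi> k \<xi> = Fp S \<phi> k \<xi>'"
  unfolding Fp_def
proof (intro arg_cong[where f="\<lambda>x. _ * x"] sum.cong refl)
  fix z assume z: "z \<in> Bp S k"
  show "\<phi> (shift z \<xi>) = \<phi> (shift z \<xi>')"
  proof (rule loc[OF lf])
    fix s assume "s \<in> S"
    then have "s + z \<in> {-int k..int k}" using z unfolding Bp_def by (auto simp: add.commute)
    then show "shift z \<xi> s = shift z \<xi>' s" unfolding shift_def using assms by simp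
  qed
qed

lemma Fp_bnd:
  assumes "good \<xi>"
  shows "\<bar>Fp S \<phi> k \<xi>\<bar> \<le> Mphi S \<phi>"
proof -
  have "\<bar>\<Sum>z\<in>Bp S k. \<phi> (shift z \<xi>)\<bar> \<le> (\<Sum>z\<in>Bp S k. Mphi S \<phi>)"
    using assms unfolding good_def shift_def by (intro order.trans[OF sum_abs] sum_mono phi_bnd[OF lf]) simp
  also have "\<dots> = real (card (Bp S k)) * Mphi S \<phi>" by simp
  also have "\<dots> \<le> (2 * real k + 1) * Mphi S \<phi>"
    using card_Bp_le Mphi_nonneg[OF lf] by (intro mult_right_mono) auto
  finally show ?thesis unfolding Fp_def by (simp add: abs_mult field_simps)
qed

lemma boundary_bnd:
  assumes "good \<xi>"
  shows "\<bar>(1 / (2 * real k + 1)) * (\<Sum>z\<in>{-int k..int k}. \<phi> (shift z \<xi>)) - Fp S \<phi> k \<xi>\<bar>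
         \<le> Mphi S \<phi> * real (Rb S) / (2 * real k + 1)"
proof -
  have fS: "finite S" by (rule finS[OF lf])
  have "(\<Sum>z\<in>{-int k..int k}. \<phi> (shift z \<xi>)) = (\<Sum>z\<in>Bp S k. \<phi> (shift z \<xi>)) + (\<Sum>z\<in>{-int k..int k} - Bp S k. \<phi> (shift z \<xi>))"
    using sum.subset_diff[OF Bp_sub[of S k]] by (simp add: add.commute)
  then have d: "(1 / (2 * real k + 1)) * (\<Sum>z\<in>{-int k..int k}. \<phi> (shift z \<xi>)) - Fp S \<phi> k \<xi>
      = (1 / (2 * real k + 1)) * (\<Sum>z\<in>{-int k..int k} - Bp S k. \<phi> (shift z \<xi>))"
    unfolding Fp_def by (simp add: algebra_simps)
  have "\<bar>\<Sum>z\<in>{-int k..int k} - Bp S k. \<phi> (shift z \<xi>)\<bar> \<le> (\<Sum>z\<in>{-int k..int k} - Bp S k. Mphi S \<phi>)"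
    using assms unfolding good_def shift_def by (intro order.trans[OF sum_abs] sum_mono phi_bnd[OF lf]) simp
  also have "\<dots> = real (card ({-int k..int k} - Bp S k)) * Mphi S \<phi>" by simp
  also have "\<dots> \<le> real (Rb S) * Mphi S \<phi>"
    using boundary_card[OF fS, of k] Mphi_nonneg[OF lf] by (intro mult_right_mono) auto
  finally have X: "\<bar>\<Sum>z\<in>{-int k..int k} - Bp S k. \<phi> (shift z \<xi>)\<bar> \<le> real (Rb S) * Mphi S \<phi>" .
  have m: "2 * real k + 1 > 0" by simp
  have "\<bar>(1 / (2 * real k + 1)) * (\<Sum>z\<in>{-int k..int k} - Bp S k. \<phi> (shift z \<xi>))\<bar>
      = \<bar>\<Sum>z\<in>{-int k..int k} - Bp S k. \<phi> (shift z \<xi>)\<bar> / (2 * real k + 1)"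
    using m by (simp add: abs_mult)
  also have "\<dots> \<le> real (Rb S) * Mphi S \<phi> / (2 * real k + 1)" using X m by (intro divide_right_mono) auto
  finally show ?thesis unfolding d by (simp add: mult.commute)
qed

lemma main_bound:
  assumes N: "2 * k + 2 \<le> N" and dens: "is_density N f" and D: "Dirichlet N f \<le> c / real N"
  shows "(\<Sum>\<eta>\<in>Omega N. \<bar>box_avg N k \<phi> \<eta> - phi_tilde S \<phi> (box_density N k 1 \<eta>) (box_density N k 2 \<eta>)\<bar> * f \<eta> * (1/3)^N)
    \<le> Mphi S \<phi> * real (Rb S) / (2 * real k + 1)
       + sqrt ((32 * real (card S) ^ 2 + 2 * real (Rb S) ^ 2) * (Mphi S \<phi>)\<^sup>2 / (2 * real k + 1))
       + 2 * Mphi S \<phi> * ((2 * real k + 1) * ((4 * real k) * (2 * sqrt (2 * (c / real N)))))"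
proof -
  define M where "M = Mphi S \<phi>"
  define m where "m = 2 * real k + 1"
  define Cv where "Cv = (32 * real (card S) ^ 2 + 2 * real (Rb S) ^ 2) * (Mphi S \<phi>)\<^sup>2"
  define w where "w = (1/3::real)^N"
  define \<beta> where "\<beta> = 2 * sqrt (2 * Dirichlet N f)"
  define \<beta>' where "\<beta>' = 2 * sqrt (2 * (c / real N))"
  define h where "h \<eta> = \<bar>Fp S \<phi> k (per N \<eta>) - Gx S \<phi> k (per N \<eta>)\<bar>" for \<eta>
  have Np: "N > 0" using N by simp
  have N1: "2 * k + 1 \<le> N" using N by simp
  have m: "m > 0" unfolding m_def by simp
  have M0: "M \<ge> 0" unfolding M_def by (rule Mphi_nonneg[OF lf])
  have w0: "w \<ge> 0" unfolding w_def by simp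
  have fpos: "\<And>\<eta>. \<eta> \<in> Omega N \<Longrightarrow> f \<eta> \<ge> 0" using dens unfolding is_density_def by auto
  have fsum: "(\<Sum>\<eta>\<in>Omega N. f \<eta> * w) = 1" using dens unfolding is_density_def w_def by auto
  have D0: "Dirichlet N f \<ge> 0" by (rule Dirichlet_nonneg[OF dens Np])
  have b0: "\<beta> \<ge> 0" unfolding \<beta>_def using D0 by simp
  have bb: "\<beta> \<le> \<beta>'" unfolding \<beta>_def \<beta>'_def using D by simp
  have bond: "\<And>x. x \<in> {0..<int N} \<Longrightarrow> dlt N f (Transposition.transpose x ((x + 1) mod int N)) \<le> \<beta>"
    unfolding \<beta>_def by (rule dlt_bond[OF dens])
  have hb: "\<bar>h \<eta>\<bar> \<le> 2 * M" if "\<eta> \<in> Omega N" for \<eta>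
  proof -
    have g: "good (per N \<eta>)" by (rule good_per[OF Np that])
    show ?thesis unfolding h_def M_def using Fp_bnd[OF g, of k] G_bnd[OF lf g, of k] by simp
  qed
  have step_a: "\<bar>box_avg N k \<phi> \<eta> - phi_tilde S \<phi> (box_density N k 1 \<eta>) (box_density N k 2 \<eta>)\<bar> \<le> h \<eta> + M * real (Rb S) / m"
    if "\<eta> \<in> Omega N" for \<eta>
  proof -
    have g: "good (per N \<eta>)" by (rule good_per[OF Np that])
    show ?thesis unfolding Gx_box box_avg_def h_def M_def m_def
      using boundary_bnd[OF g, of k] by linarith
  qed
  have "(\<Sum>\<eta>\<in>Omega N. \<bar>box_avg N k \<phi> \<eta> - phi_tilde S \<phi> (box_density N k 1 \<eta>) (box_density N k 2 \<eta>)\<bar> * f \<eta> * (1/3)^N)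
      \<le> (\<Sum>\<eta>\<in>Omega N. (h \<eta> + M * real (Rb S) / m) * (f \<eta> * w))"
    unfolding w_def using step_a fpos by (intro sum_mono) (simp add: mult.assoc mult_right_mono)
  also have "\<dots> = (\<Sum>\<eta>\<in>Omega N. h \<eta> * (f \<eta> * w)) + (M * real (Rb S) / m) * (\<Sum>\<eta>\<in>Omega N. f \<eta> * w)"
    by (simp add: distrib_right sum.distrib sum_distrib_left)
  also have "\<dots> = (\<Sum>\<eta>\<in>Omega N. h \<eta> * (f \<eta> * w)) + M * real (Rb S) / m"
    using fsum by simp
  finally have E1: "(\<Sum>\<eta>\<in>Omega N. \<bar>box_avg N k \<phi> \<eta> - phi_tilde S \<phi> (box_density N k 1 \<eta>) (box_density N k 2 \<eta>)\<bar> * f \<eta> * (1/3)^N)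
      \<le> (\<Sum>\<eta>\<in>Omega N. h \<eta> * (f \<eta> * w)) + M * real (Rb S) / m" .
  have step_c: "(\<Sum>\<eta>\<in>Omega N. h \<eta> * (f \<eta> * w)) \<le> (\<Sum>\<eta>\<in>Omega N. h (\<eta> \<circ> hat N k \<pi>) * (f \<eta> * w)) + 2 * M * (m * ((4 * real k) * \<beta>))"
    if p: "\<pi> permutes {-int k..int k}" for \<pi>
  proof -
    have hp: "hat N k \<pi> permutes {0..<int N}" by (rule hat_permutes_N[OF N1 p])
    have X: "\<bar>(\<Sum>\<eta>\<in>Omega N. h (\<eta> \<circ> hat N k \<pi>) * f \<eta> * (1/3)^N) - (\<Sum>\<eta>\<in>Omega N. h \<eta> * f \<eta> * (1/3)^N)\<bar> \<le> (2 * M) * dlt N f (hat N k \<pi>)"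
      by (rule dlt_symm[OF hp dens hb])
    have d: "dlt N f (hat N k \<pi>) \<le> m * ((4 * real k) * \<beta>)" unfolding m_def by (rule dlt_hat[OF N p bond b0])
    have Y: "(2 * M) * dlt N f (hat N k \<pi>) \<le> 2 * M * (m * ((4 * real k) * \<beta>))"
      using d M0 by (intro mult_left_mono) auto
    have e1: "(\<Sum>\<eta>\<in>Omega N. h (\<eta> \<circ> hat N k \<pi>) * f \<eta> * (1/3)^N) = (\<Sum>\<eta>\<in>Omega N. h (\<eta> \<circ> hat N k \<pi>) * (f \<eta> * w))"
      unfolding w_def by (simp add: mult.assoc)
    have e2: "(\<Sum>\<eta>\<in>Omega N. h \<eta> * f \<eta> * (1/3)^N) = (\<Sum>\<eta>\<in>Omega N. h \<eta> * (f \<eta> * w))"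
      unfolding w_def by (simp add: mult.assoc)
    from X have "- ((\<Sum>\<eta>\<in>Omega N. h (\<eta> \<circ> hat N k \<pi>) * (f \<eta> * w)) - (\<Sum>\<eta>\<in>Omega N. h \<eta> * (f \<eta> * w))) \<le> (2 * M) * dlt N f (hat N k \<pi>)"
      unfolding e1 e2 by (rule abs_le_D2)
    then show ?thesis using Y by linarith
  qed
  have "(\<Sum>\<eta>\<in>Omega N. h \<eta> * (f \<eta> * w)) \<le> avgP k (\<lambda>\<pi>. (\<Sum>\<eta>\<in>Omega N. h (\<eta> \<circ> hat N k \<pi>) * (f \<eta> * w)) + 2 * M * (m * ((4 * real k) * \<beta>)))"
    using avgP_mono'[of k "\<lambda>_. (\<Sum>\<eta>\<in>Omega N. h \<eta> * (f \<eta> * w))", OF step_c] avgP_const by simp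
  also have "\<dots> = (\<Sum>\<eta>\<in>Omega N. (f \<eta> * w) * avgP k (\<lambda>\<pi>. h (\<eta> \<circ> hat N k \<pi>))) + 2 * M * (m * ((4 * real k) * \<beta>))"
    unfolding avgP_add avgP_const avgP_sum by (simp add: avgP_cmult[symmetric] mult.commute)
  also have "\<dots> \<le> (\<Sum>\<eta>\<in>Omega N. (f \<eta> * w) * sqrt (Cv / m)) + 2 * M * (m * ((4 * real k) * \<beta>'))"
  proof (rule add_mono[OF sum_mono])
    fix \<eta> assume e: "\<eta> \<in> Omega N"
    have g: "good (per N \<eta>)" by (rule good_per[OF Np e])
    have fw: "0 \<le> f \<eta> * w" using fpos[OF e] w0 by simp
    have "avgP k (\<lambda>\<pi>. h (\<eta> \<circ> hat N k \<pi>)) = avgP k (\<lambda>\<pi>. \<bar>Fp S \<phi> k (per N \<eta> \<circ> \<pi>) - Gx S \<phi> k (per N \<eta>)\<bar>)"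
    proof (rule avgP_cong)
      fix \<pi> assume p: "\<pi> permutes {-int k..int k}"
      have loc1: "per N (\<eta> \<circ> hat N k \<pi>) x = (per N \<eta> \<circ> \<pi>) x" if "x \<in> {-int k..int k}" for x
        using per_hat[OF N1 that] by simp
      have "Fp S \<phi> k (per N (\<eta> \<circ> hat N k \<pi>)) = Fp S \<phi> k (per N \<eta> \<circ> \<pi>)" by (rule Fp_loc) (rule loc1)
      moreover have "Gx S \<phi> k (per N (\<eta> \<circ> hat N k \<pi>)) = Gx S \<phi> k (per N \<eta> \<circ> \<pi>)" by (rule Gx_loc) (rule loc1)
      moreover have "Gx S \<phi> k (per N \<eta> \<circ> \<pi>) = Gx S \<phi> k (per N \<eta>)" by (rule Gx_perm[OF p])
      ultimately show "h (\<eta> \<circ> hat N k \<pi>) = \<bar>Fp S \<phi> k (per N \<eta> \<circ> \<pi>) - Gx S \<phi> k (per N \<eta>)\<bar>"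
        unfolding h_def by simp
    qed
    also have "\<dots> \<le> sqrt (avgP k (\<lambda>\<pi>. (Fp S \<phi> k (per N \<eta> \<circ> \<pi>) - Gx S \<phi> k (per N \<eta>))\<^sup>2))"
      by (rule avgP_CS)
    also have "\<dots> \<le> sqrt (Cv / m)"
      unfolding Cv_def m_def by (intro real_sqrt_le_mono VB[OF lf g])
    finally have "avgP k (\<lambda>\<pi>. h (\<eta> \<circ> hat N k \<pi>)) \<le> sqrt (Cv / m)" .
    then show "(f \<eta> * w) * avgP k (\<lambda>\<pi>. h (\<eta> \<circ> hat N k \<pi>)) \<le> (f \<eta> * w) * sqrt (Cv / m)"
      using fw by (rule mult_left_mono)
  next
    show "2 * M * (m * ((4 * real k) * \<beta>)) \<le> 2 * M * (m * ((4 * real k) * \<beta>'))"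
      using bb M0 m by (intro mult_left_mono) auto
  qed
  also have "\<dots> = sqrt (Cv / m) + 2 * M * (m * ((4 * real k) * \<beta>'))"
    using fsum by (simp add: sum_distrib_right[symmetric])
  finally have E2: "(\<Sum>\<eta>\<in>Omega N. h \<eta> * (f \<eta> * w)) \<le> sqrt (Cv / m) + 2 * M * (m * ((4 * real k) * \<beta>'))" .
  show ?thesis using E1 E2 unfolding M_def m_def Cv_def \<beta>'_def by linarith
qed

end

lemma box_lim_aux: "filterlim (\<lambda>k::nat. 2 * real k + 1) at_top sequentially"
  by (rule filterlim_at_top_mono[OF filterlim_real_sequentially]) auto

lemma box_lim: "(\<lambda>k::nat. C / (2 * real k + 1)) \<longlonglongrightarrow> 0"
  by (rule tendsto_divide_0[OF tendsto_const filterlim_at_top_imp_at_infinity[OF box_lim_aux]])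

lemma N_lim: "(\<lambda>N::nat. 2 * sqrt (2 * (c / real N))) \<longlonglongrightarrow> 0"
proof -
  have "(\<lambda>N::nat. 2 * sqrt (2 * (c / real N))) \<longlonglongrightarrow> 2 * sqrt (2 * 0)"
    by (intro tendsto_intros lim_const_over_n)
  then show ?thesis by simp
qed

lemma const_density:
  assumes "c > 0"
  shows "\<exists>f. is_density N f \<and> Dirichlet N f \<le> c / real N \<and> (\<forall>\<eta>\<in>Omega N. f \<eta> \<ge> 0)"
proof -
  have fin: "finite (Omega N)" by (rule finite_Omega)
  have "(\<lambda>_. 0) \<in> Omega N" unfolding Omega_def by simp
  then have cp: "card (Omega N) > 0" using fin by (auto simp: card_gt_0_iff)
  define f where "f = (\<lambda>\<eta>::int \<Rightarrow> nat. 1 / (real (card (Omega N)) * (1/3)^N))"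
  have "(\<Sum>\<eta>\<in>Omega N. f \<eta> * (1/3)^N) = 1" unfolding f_def using cp by simp
  moreover have "\<forall>\<eta>\<in>Omega N. f \<eta> \<ge> 0" unfolding f_def by simp
  moreover have "Dirichlet N f = 0" unfolding Dirichlet_def f_def by simp
  moreover have "c / real N \<ge> 0" using assms by simp
  ultimately show ?thesis unfolding is_density_def by auto
qed

theorem lemmaA4:
  fixes c :: real and S :: "int set" and \<phi> :: "(int \<Rightarrow> nat) \<Rightarrow> real"
  assumes "c > 0" and "local_fun S \<phi>"
  shows "limsup (\<lambda>k. limsup (\<lambda>N.
            SUP f\<in>{f. is_density N f \<and> Dirichlet N f \<le> c / real N}.
              ereal (\<Sum>\<eta>\<in>Omega N.
                 \<bar>box_avg N k \<phi> \<eta> -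
                   phi_tilde S \<phi> (box_density N k 1 \<eta>) (box_density N k 2 \<eta>)\<bar>
                 * f \<eta> * (1/3)^N))) = 0"
proof -
  note lf = assms(2)
  define E where "E N k f = (\<Sum>\<eta>\<in>Omega N.
                 \<bar>box_avg N k \<phi> \<eta> -
                   phi_tilde S \<phi> (box_density N k 1 \<eta>) (box_density N k 2 \<eta>)\<bar>
                 * f \<eta> * (1/3)^N)" for N k f
  define a where "a k N = (SUP f\<in>{f. is_density N f \<and> Dirichlet N f \<le> c / real N}. ereal (E N k f))" for k N
  define bk where "bk k = Mphi S \<phi> * real (Rb S) / (2 * real k + 1)
       + sqrt ((32 * real (card S) ^ 2 + 2 * real (Rb S) ^ 2) * (Mphi S \<phi>)\<^sup>2 / (2 * real k + 1))" for k :: nat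
  define r where "r k N = 2 * Mphi S \<phi> * ((2 * real k + 1) * ((4 * real k) * (2 * sqrt (2 * (c / real N)))))" for k N :: nat
  have up: "a k N \<le> ereal (bk k + r k N)" if "2 * k + 2 \<le> N" for k N
    unfolding a_def
  proof (rule SUP_least)
    fix f assume "f \<in> {f. is_density N f \<and> Dirichlet N f \<le> c / real N}"
    then have "E N k f \<le> bk k + r k N" unfolding E_def bk_def r_def
      using main_bound[OF lf that] by auto
    then show "ereal (E N k f) \<le> ereal (bk k + r k N)" by simp
  qed
  have low: "0 \<le> a k N" for k N
  proof -
    obtain f where f: "is_density N f" "Dirichlet N f \<le> c / real N" "\<forall>\<eta>\<in>Omega N. f \<eta> \<ge> 0"
      using const_density[OF assms(1)] by blast
    have "0 \<le> E N k f" unfolding E_def using f(3) by (intro sum_nonneg) auto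
    then have "ereal 0 \<le> ereal (E N k f)" by simp
    also have "\<dots> \<le> a k N" unfolding a_def using f(1,2) by (intro SUP_upper) auto
    finally show ?thesis by (simp add: zero_ereal_def)
  qed
  have LsN: "limsup (a k) \<le> ereal (bk k)" for k
  proof -
    have "limsup (a k) \<le> limsup (\<lambda>N. ereal (bk k + r k N))"
      by (rule Limsup_mono) (rule eventually_sequentiallyI[of "2 * k + 2"], rule up)
    also have "\<dots> = ereal (bk k)"
    proof (rule lim_imp_Limsup)
      show "\<not> trivial_limit sequentially" by simp
      have "(\<lambda>N. r k N) \<longlonglongrightarrow> 2 * Mphi S \<phi> * ((2 * real k + 1) * ((4 * real k) * 0))"
        unfolding r_def by (intro tendsto_intros N_lim)
      then have "(\<lambda>N. bk k + r k N) \<longlonglongrightarrow> bk k + 0" by (intro tendsto_intros) simp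
      then show "(\<lambda>N. ereal (bk k + r k N)) \<longlonglongrightarrow> ereal (bk k)" by (simp add: tendsto_ereal)
    qed
    finally show ?thesis .
  qed
  have LsN0: "0 \<le> limsup (a k)" for k
  proof -
    have "limsup (\<lambda>_. 0::ereal) \<le> limsup (a k)" by (rule Limsup_mono) (simp add: low)
    then show ?thesis by (simp add: Limsup_const)
  qed
  have bk0: "bk \<longlonglongrightarrow> 0"
  proof -
    have "(\<lambda>k. Mphi S \<phi> * real (Rb S) / (2 * real k + 1)) \<longlonglongrightarrow> 0" by (rule box_lim)
    moreover have "(\<lambda>k. sqrt ((32 * real (card S) ^ 2 + 2 * real (Rb S) ^ 2) * (Mphi S \<phi>)\<^sup>2 / (2 * real k + 1))) \<longlonglongrightarrow> sqrt 0"
      by (intro tendsto_intros box_lim)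
    ultimately have "bk \<longlonglongrightarrow> 0 + sqrt 0" unfolding bk_def by (intro tendsto_add)
    then show ?thesis by simp
  qed
  have "limsup (\<lambda>k. limsup (a k)) \<le> limsup (\<lambda>k. ereal (bk k))"
    by (rule Limsup_mono) (simp add: LsN)
  also have "\<dots> = ereal 0"
    by (rule lim_imp_Limsup) (simp_all add: tendsto_ereal bk0)
  finally have U: "limsup (\<lambda>k. limsup (a k)) \<le> 0" by (simp add: zero_ereal_def)
  have "limsup (\<lambda>_. 0::ereal) \<le> limsup (\<lambda>k. limsup (a k))" by (rule Limsup_mono) (simp add: LsN0)
  then have L: "0 \<le> limsup (\<lambda>k. limsup (a k))" by (simp add: Limsup_const)
  have "limsup (\<lambda>k. limsup (a k)) = 0" using U L by simp
  then show ?thesis unfolding a_def E_def .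
qed

end
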